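(* Let $(X,d)$ be a compact metric space, $f:X\to X$ continuous, $x\in X$, and $\Lambda=\omega_f(x)$. Then $C(\Lambda,f)$ equals the closure of the set $\{y\in\Lambda: \underline d(N(y,B_\varepsilon(y)))>0 \text{ for every } \varepsilon>0\}$.
   Context: $\omega_f(x)$ is the $\omega$-limit set of $x$. $N(y,U)=\{n\ge1: f^n(y)\in U\}$, $B_\varepsilon(y)$ the open ball, $\underline d(S)=\liminf_{n\to\infty}|S\cap\{0,\dots,n-1\}|/n$. For a closed $f$-invariant set $\Lambda$, the measure center $C(\Lambda,f)$ is the smallest closed $f$-invariant subset of $\Lambda$ having full measure for every $f$-invariant Borel probability measure on $\Lambda$. *)

theory Defs
  imports "HOL-Probability.Probability"
begin

definition omega_limit :: "('a::topological_space \<Rightarrow> 'a) \<Rightarrow> 'a \<Rightarrow> 'a set" where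
  "omega_limit f x = {y. \<exists>r. strict_mono r \<and> ((\<lambda>k. (f ^^ (r k)) x) \<longlonglongrightarrow> y)}"

definition visit_times :: "('a \<Rightarrow> 'a) \<Rightarrow> 'a \<Rightarrow> 'a set \<Rightarrow> nat set" where
  "visit_times f y U = {n. n \<ge> 1 \<and> (f ^^ n) y \<in> U}"

definition lower_density :: "nat set \<Rightarrow> ereal" where
  "lower_density S = liminf (\<lambda>n. ereal (real (card (S \<inter> {0..<n})) / real n))"

definition invariant_measures :: "('a::topological_space \<Rightarrow> 'a) \<Rightarrow> 'a set \<Rightarrow> 'a measure set" where
  "invariant_measures f L =
     {\<mu>. sets \<mu> = sets (restrict_space borel L) \<and> prob_space \<mu> \<and>
          (\<forall>A \<in> sets \<mu>. emeasure \<mu> (f -` A \<inter> L) = emeasure \<mu> A)}"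

definition is_measure_center :: "('a::topological_space \<Rightarrow> 'a) \<Rightarrow> 'a set \<Rightarrow> 'a set \<Rightarrow> bool" where
  "is_measure_center f L C \<longleftrightarrow>
     C \<subseteq> L \<and> closed C \<and> f ` C \<subseteq> C \<and> (\<forall>\<mu> \<in> invariant_measures f L. emeasure \<mu> C = 1) \<and>
     (\<forall>D. D \<subseteq> L \<and> closed D \<and> f ` D \<subseteq> D \<and> (\<forall>\<mu> \<in> invariant_measures f L. emeasure \<mu> D = 1)
          \<longrightarrow> C \<subseteq> D)"

definition measure_center :: "'a set \<Rightarrow> ('a::topological_space \<Rightarrow> 'a) \<Rightarrow> 'a set" where
  "measure_center L f = (THE C. is_measure_center f L C)"

end

theory Submission
  imports Defs "HOL-Analysis.Analysis"
begin

lemma subseq_from_freq: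
  fixes s :: "nat \<Rightarrow> 'a::metric_space"
  assumes H: "\<And>e N. e > 0 \<Longrightarrow> \<exists>n\<ge>N. dist (s n) y < e"
  shows "\<exists>r. strict_mono r \<and> (\<lambda>k. s (r k)) \<longlonglongrightarrow> y"
proof -
  define g where "g N k = (SOME n. n \<ge> N \<and> dist (s n) y < 1 / (real k + 1))" for N k :: nat
  have g: "g N k \<ge> N \<and> dist (s (g N k)) y < 1 / (real k + 1)" for N k
    unfolding g_def by (rule someI_ex) (use H[of "1 / (real k + 1)" N] in auto)
  define r where "r = rec_nat (g 0 0) (\<lambda>k rk. g (Suc rk) (Suc k))"
  have r0: "r 0 = g 0 0" and rS: "r (Suc k) = g (Suc (r k)) (Suc k)" for k
    by (simp_all add: r_def)
  have sm: "strict_mono r"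
    unfolding strict_mono_Suc_iff
  proof
    fix n show "r n < r (Suc n)" using g[of "Suc (r n)" "Suc n"] by (simp add: rS)
  qed
  have d: "dist (s (r k)) y < 1 / (real k + 1)" for k
  proof (cases k)
    case 0 then show ?thesis using g[of 0 0] by (simp add: r0)
  next
    case (Suc m) then show ?thesis using g[of "Suc (r m)" "Suc m"] by (simp add: rS)
  qed
  have "(\<lambda>k. s (r k)) \<longlonglongrightarrow> y"
  proof (rule metric_LIMSEQ_I)
    fix e :: real assume "e > 0"
    then obtain K :: nat where K: "1 / (real K + 1) < e"
      by (metis nat_approx_posE of_nat_Suc add.commute)
    show "\<exists>K. \<forall>k\<ge>K. dist (s (r k)) y < e"
    proof (intro exI allI impI)
      fix k assume "K \<le> k"
      then have "1 / (real k + 1) \<le> 1 / (real K + 1)"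
        by (simp add: frac_le)
      with d[of k] K show "dist (s (r k)) y < e" by linarith
    qed
  qed
  with sm show ?thesis by blast
qed

lemma omega_limit_iff:
  fixes f :: "'a::metric_space \<Rightarrow> 'a"
  shows "y \<in> omega_limit f x \<longleftrightarrow> (\<forall>e>0. \<forall>N. \<exists>n\<ge>N. dist ((f ^^ n) x) y < e)"
proof
  assume "y \<in> omega_limit f x"
  then obtain r where r: "strict_mono r" "(\<lambda>k. (f ^^ (r k)) x) \<longlonglongrightarrow> y"
    by (auto simp: omega_limit_def)
  show "\<forall>e>0. \<forall>N. \<exists>n\<ge>N. dist ((f ^^ n) x) y < e"
  proof (intro allI impI)
    fix e :: real and N assume "e > 0"
    from metric_LIMSEQ_D[OF r(2) this] obtain K where K: "\<forall>k\<ge>K. dist ((f ^^ (r k)) x) y < e" by blast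
    have "r (max K N) \<ge> N" using seq_suble[OF r(1), of "max K N"] by simp
    then show "\<exists>n\<ge>N. dist ((f ^^ n) x) y < e" using K by (intro exI[of _ "r (max K N)"]) auto
  qed
next
  assume "\<forall>e>0. \<forall>N. \<exists>n\<ge>N. dist ((f ^^ n) x) y < e"
  then show "y \<in> omega_limit f x"
    using subseq_from_freq[of "\<lambda>n. (f ^^ n) x" y] by (auto simp: omega_limit_def)
qed

lemma closed_omega_limit:
  fixes f :: "'a::metric_space \<Rightarrow> 'a"
  shows "closed (omega_limit f x)"
  unfolding closed_sequential_limits
proof (intro allI impI, elim conjE)
  fix ys :: "nat \<Rightarrow> 'a" and y
  assume ys: "\<forall>n. ys n \<in> omega_limit f x" and lim: "ys \<longlonglongrightarrow> y"
  show "y \<in> omega_limit f x"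
    unfolding omega_limit_iff
  proof (intro allI impI)
    fix e :: real and N assume "e > 0"
    then obtain j where j: "dist (ys j) y < e / 2"
      using metric_LIMSEQ_D[OF lim, of "e/2"] by auto
    obtain n where n: "n \<ge> N" "dist ((f ^^ n) x) (ys j) < e / 2"
      using ys[rule_format, of j] \<open>e > 0\<close> unfolding omega_limit_iff by (meson half_gt_zero)
    have "dist ((f ^^ n) x) y < e" using dist_triangle[of "(f^^n) x" y "ys j"] n(2) j by linarith
    with n show "\<exists>n\<ge>N. dist ((f ^^ n) x) y < e" by blast
  qed
qed

lemma omega_limit_invariant:
  fixes f :: "'a::metric_space \<Rightarrow> 'a"
  assumes "continuous_on UNIV f" "y \<in> omega_limit f x"
  shows "f y \<in> omega_limit f x"
proof -
  from assms(2) obtain r where r: "strict_mono r" "(\<lambda>k. (f ^^ (r k)) x) \<longlonglongrightarrow> y"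
    by (auto simp: omega_limit_def)
  have "(\<lambda>k. f ((f ^^ (r k)) x)) \<longlonglongrightarrow> f y"
  proof (rule isCont_tendsto_compose[OF _ r(2)])
    show "isCont f y" using assms(1) by (simp add: continuous_on_eq_continuous_at)
  qed
  then have "(\<lambda>k. (f ^^ (Suc (r k))) x) \<longlonglongrightarrow> f y" by simp
  moreover have "strict_mono (\<lambda>k. Suc (r k))" using r(1) by (simp add: strict_mono_def)
  ultimately show ?thesis unfolding omega_limit_def by blast
qed

lemma omega_limit_funpow:
  fixes f :: "'a::metric_space \<Rightarrow> 'a"
  assumes "continuous_on UNIV f" "y \<in> omega_limit f x"
  shows "(f ^^ n) y \<in> omega_limit f x"
  by (induction n) (use assms omega_limit_invariant in auto)

definition posdens :: "nat set \<Rightarrow> bool" where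
  "posdens S \<longleftrightarrow> (\<exists>c>0. \<forall>\<^sub>F n in sequentially. c * real n \<le> real (card (S \<inter> {0..<n})))"

lemma lower_density_pos_iff: "lower_density S > 0 \<longleftrightarrow> posdens S"
proof
  assume "lower_density S > 0"
  then obtain c :: ereal where c: "0 < c" "c < lower_density S"
    using ereal_dense2 by blast
  obtain c' where c': "c = ereal c'" "c' > 0"
    using c by (cases c) (auto simp: lower_density_def)
  have ev: "\<forall>\<^sub>F n in sequentially. c < ereal (real (card (S \<inter> {0..<n})) / real n)"
    using c(2) unfolding lower_density_def using less_LiminfD by blast
  have "\<forall>\<^sub>F n in sequentially. c' * real n \<le> real (card (S \<inter> {0..<n}))"
    using ev eventually_gt_at_top[of 0]
  proof eventually_elim
    case (elim n)
    then have "c' < real (card (S \<inter> {0..<n})) / real n" using c'(1) by simp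
    then show ?case using elim(2) by (simp add: field_simps)
  qed
  with c' show "posdens S" unfolding posdens_def by blast
next
  assume "posdens S"
  then obtain c where c: "c > 0" "\<forall>\<^sub>F n in sequentially. c * real n \<le> real (card (S \<inter> {0..<n}))"
    unfolding posdens_def by blast
  have "\<forall>\<^sub>F n in sequentially. ereal c \<le> ereal (real (card (S \<inter> {0..<n})) / real n)"
    using c(2) eventually_gt_at_top[of 0]
    by eventually_elim (auto simp: field_simps)
  then have "ereal c \<le> lower_density S"
    unfolding lower_density_def by (rule Liminf_bounded)
  with c(1) show "lower_density S > 0" by (meson ereal_less(2) less_le_trans)
qed

lemma posdens_mono_shift:
  assumes "posdens S" and "\<And>n. card (S \<inter> {0..<n}) \<le> card (T \<inter> {0..<n}) + k"
  shows "posdens T"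
proof -
  obtain c where c: "c > 0" "\<forall>\<^sub>F n in sequentially. c * real n \<le> real (card (S \<inter> {0..<n}))"
    using assms(1) unfolding posdens_def by blast
  obtain N :: nat where N: "real N > 2 * real k / c" using reals_Archimedean2 by blast
  have "\<forall>\<^sub>F n in sequentially. c / 2 * real n \<le> real (card (T \<inter> {0..<n}))"
    using c(2) eventually_ge_at_top[of N]
  proof eventually_elim
    case (elim n)
    have "real N \<le> real n" using elim(2) by simp
    then have "2 * real k / c < real n" using N by linarith
    then have "real k < c / 2 * real n" using c(1) by (simp add: field_simps)
    moreover have "real (card (S \<inter> {0..<n})) \<le> real (card (T \<inter> {0..<n})) + real k"
      using assms(2)[of n] by linarith
    ultimately show ?case using elim(1) by linarith
  qed
  then show ?thesis unfolding posdens_def using c(1) by (intro exI[of _ "c/2"]) auto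
qed

definition Sg :: "('a \<Rightarrow> real) \<Rightarrow> ('a \<Rightarrow> 'a) \<Rightarrow> nat \<Rightarrow> 'a \<Rightarrow> real" where
  "Sg \<phi> T n z = (\<Sum>i<n. \<phi> ((T ^^ i) z))"

fun Mx :: "('a \<Rightarrow> real) \<Rightarrow> ('a \<Rightarrow> 'a) \<Rightarrow> nat \<Rightarrow> 'a \<Rightarrow> real" where
  "Mx \<phi> T 0 z = 0"
| "Mx \<phi> T (Suc N) z = max (Mx \<phi> T N z) (Sg \<phi> T (Suc N) z)"

lemma Sg_Suc: "Sg \<phi> T (Suc m) z = \<phi> z + Sg \<phi> T m (T z)"
  unfolding Sg_def sum.lessThan_Suc_shift by (simp add: funpow_Suc_right del: funpow.simps)

lemma Mx_ge: "n \<le> N \<Longrightarrow> Sg \<phi> T n z \<le> Mx \<phi> T N z"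
proof (induction N)
  case 0 then show ?case by (simp add: Sg_def)
next
  case (Suc N)
  show ?case
  proof (cases "n = Suc N")
    case True then show ?thesis by simp
  next
    case False then have "n \<le> N" using Suc.prems by simp
    then show ?thesis using Suc.IH by (simp add: le_max_iff_disj)
  qed
qed

lemma Mx_attained: "\<exists>n\<le>N. Mx \<phi> T N z = Sg \<phi> T n z"
proof (induction N)
  case 0 then show ?case by (simp add: Sg_def)
next
  case (Suc N)
  then obtain n where "n \<le> N" "Mx \<phi> T N z = Sg \<phi> T n z" by blast
  show ?case
  proof (cases "Mx \<phi> T N z \<le> Sg \<phi> T (Suc N) z")
    case True then show ?thesis by (intro exI[of _ "Suc N"]) (simp add: max_def)
  next
    case False then show ?thesis using \<open>n \<le> N\<close> \<open>Mx \<phi> T N z = Sg \<phi> T n z\<close>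
      by (intro exI[of _ n]) (simp add: max_def)
  qed
qed

lemma Mx_nonneg: "0 \<le> Mx \<phi> T N z"
  using Mx_ge[of 0 N] by (simp add: Sg_def)

lemma Mx_mono: "N \<le> N' \<Longrightarrow> Mx \<phi> T N z \<le> Mx \<phi> T N' z"
proof -
  assume "N \<le> N'"
  obtain n where "n \<le> N" "Mx \<phi> T N z = Sg \<phi> T n z" using Mx_attained[of N \<phi> T z] by auto
  moreover have "n \<le> N'" using \<open>n \<le> N\<close> \<open>N \<le> N'\<close> by (rule le_trans)
  ultimately show ?thesis using Mx_ge[of n N' \<phi> T z] by argo
qed



lemma Mx_key: "Mx \<phi> T N z > 0 \<Longrightarrow> Mx \<phi> T N z \<le> \<phi> z + Mx \<phi> T N (T z)"
proof -
  assume pos: "Mx \<phi> T N z > 0"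
  obtain n where n: "n \<le> N" "Mx \<phi> T N z = Sg \<phi> T n z" using Mx_attained[of N \<phi> T z] by auto
  have "n \<noteq> 0"
  proof
    assume "n = 0" then show False using pos n by (simp add: Sg_def)
  qed
  then obtain m where m: "n = Suc m" by (cases n) auto
  have "Sg \<phi> T m (T z) \<le> Mx \<phi> T N (T z)" using n m by (intro Mx_ge) simp
  then show ?thesis using n m Sg_Suc[of \<phi> T m z] by simp
qed

lemma Sg_measurable[measurable]:
  assumes "T \<in> measurable M M" "\<phi> \<in> borel_measurable M"
  shows "Sg \<phi> T n \<in> borel_measurable M"
proof -
  have "(\<lambda>z. \<phi> ((T ^^ i) z)) \<in> borel_measurable M" for i
    using measurable_comp[OF measurable_compose_n[OF assms(1), of i] assms(2)] by (simp add: comp_def)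
  then show ?thesis unfolding Sg_def[abs_def] by measurable
qed

lemma Mx_measurable[measurable]:
  assumes "T \<in> measurable M M" "\<phi> \<in> borel_measurable M"
  shows "Mx \<phi> T N \<in> borel_measurable M"
proof (induction N)
  case 0 then show ?case by simp
next
  case (Suc N)
  have "(\<lambda>z. Mx \<phi> T (Suc N) z) = (\<lambda>z. max (Mx \<phi> T N z) (Sg \<phi> T (Suc N) z))" by simp
  then show ?case using Suc Sg_measurable[OF assms, of "Suc N"]
    by (metis borel_measurable_max)
qed

lemma Sg_bound: assumes b: "\<And>w. \<bar>\<phi> w\<bar> \<le> B" shows "\<bar>Sg \<phi> T n z\<bar> \<le> real n * B"
proof -
  have "\<bar>\<Sum>i<n. \<phi> ((T ^^ i) z)\<bar> \<le> (\<Sum>i<n. \<bar>\<phi> ((T ^^ i) z)\<bar>)" by (rule sum_abs)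
  also have "\<dots> \<le> (\<Sum>i<n. B)" by (rule sum_mono) (rule b)
  finally show ?thesis by (simp add: Sg_def)
qed

lemma Mx_bound: assumes b: "\<And>w. \<bar>\<phi> w\<bar> \<le> B" shows "\<bar>Mx \<phi> T N z\<bar> \<le> real N * B"
proof -
  obtain n where n: "n \<le> N" "Mx \<phi> T N z = Sg \<phi> T n z" using Mx_attained[of N \<phi> T z] by auto
  have "0 \<le> B" using b[of z] by linarith
  then have "real n * B \<le> real N * B" using n(1) by (simp add: mult_right_mono)
  moreover have "\<bar>Sg \<phi> T n z\<bar> \<le> real n * B" by (rule Sg_bound) (rule b)
  ultimately show ?thesis using n(2) by simp
qed

lemma maximal_ergodic:
  assumes P: "prob_space M" and T: "T \<in> measurable M M" and inv: "distr M M T = M"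
    and phi: "\<phi> \<in> borel_measurable M" and b: "\<And>z. \<bar>\<phi> z\<bar> \<le> B"
  shows "(\<integral>z. indicator {z\<in>space M. Mx \<phi> T N z > 0} z * \<phi> z \<partial>M) \<ge> 0"
proof -
  interpret prob_space M by fact
  have B0: "0 \<le> B" using b[of undefined] by linarith
  let ?A = "{z\<in>space M. Mx \<phi> T N z > 0}"
  let ?m = "Mx \<phi> T N"
  have mm[measurable]: "?m \<in> borel_measurable M" using Mx_measurable[OF T phi] .
  have Am: "?A \<in> sets M" by measurable
  have int_m: "integrable M ?m"
    by (rule integrable_const_bound[where B="real N * B"]) (auto intro!: AE_I2 simp: Mx_bound[OF b])
  have int_mT: "integrable M (\<lambda>z. ?m (T z))"
    by (rule integrable_const_bound[where B="real N * B"])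
       (use measurable_comp[OF T mm] in \<open>auto intro!: AE_I2 simp: comp_def Mx_bound[OF b]\<close>)
  have int_A: "integrable M (\<lambda>z. indicator ?A z * \<phi> z)"
    by (rule integrable_const_bound[where B="B"])
       (use b Am phi B0 in \<open>auto simp: indicator_def\<close>)
  have eq: "(\<integral>z. ?m (T z) \<partial>M) = (\<integral>z. ?m z \<partial>M)"
  proof -
    have "(\<integral>z. ?m z \<partial>M) = (\<integral>z. ?m z \<partial>distr M M T)" using inv by simp
    also have "\<dots> = (\<integral>z. ?m (T z) \<partial>M)" by (rule integral_distr[OF T]) simp
    finally show ?thesis by simp
  qed
  have pw: "?m z - ?m (T z) \<le> indicator ?A z * \<phi> z" if "z \<in> space M" for z
  proof (cases "?m z > 0")
    case True then show ?thesis using Mx_key[OF True] that by simp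
  next
    case False
    then have "?m z = 0" using Mx_nonneg[of \<phi> T N z] by linarith
    then show ?thesis using False Mx_nonneg[of \<phi> T N "T z"] by simp
  qed
  have "(\<integral>z. ?m z - ?m (T z) \<partial>M) \<le> (\<integral>z. indicator ?A z * \<phi> z \<partial>M)"
    by (rule integral_mono) (use int_m int_mT int_A pw in auto)
  moreover have "(\<integral>z. ?m z - ?m (T z) \<partial>M) = 0"
    using Bochner_Integration.integral_diff[OF int_m int_mT] eq by simp
  ultimately show ?thesis by simp
qed

lemma card_sum_ind: "(\<Sum>i<n. indicator G ((T^^i) z)) = real (card {i\<in>{..<n}. (T^^i) z \<in> G})"
  by (simp add: indicator_def sum.If_cases Int_def)

lemma recurrence_density:
  assumes P: "prob_space M" and T: "T \<in> measurable M M" and inv: "distr M M T = M"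
    and G: "G \<in> sets M" and pos: "measure M G > 0"
  shows "\<exists>z\<in>G. \<exists>\<delta>>0. \<forall>n\<ge>1. \<delta> * real n \<le> real (card {i\<in>{..<n}. (T^^i) z \<in> G})"
proof (rule ccontr)
  interpret prob_space M by fact
  assume "\<not> ?thesis"
  then have H: "\<And>z \<delta>. z \<in> G \<Longrightarrow> \<delta> > 0 \<Longrightarrow> \<exists>n\<ge>1. real (card {i\<in>{..<n}. (T^^i) z \<in> G}) < \<delta> * real n"
    by (meson not_le)
  define \<delta> where "\<delta> = measure M G / 2"
  have d0: "\<delta> > 0" "\<delta> \<le> 1/2" using pos prob_le_1[of G] by (auto simp: \<delta>_def)
  define \<phi> where "\<phi> z = \<delta> - indicator G z" for z
  have phim[measurable]: "\<phi> \<in> borel_measurable M" unfolding \<phi>_def[abs_def] using G by measurable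
  have phib: "\<bar>\<phi> w\<bar> \<le> 1" for w using d0 by (auto simp: \<phi>_def indicator_def)
  define A where "A N = {z\<in>space M. Mx \<phi> T N z > 0}" for N
  have Am[measurable]: "A N \<in> sets M" for N
    unfolding A_def using Mx_measurable[OF T phim, of N] by measurable
  have Sg_eq: "Sg \<phi> T n z = real n * \<delta> - real (card {i\<in>{..<n}. (T^^i) z \<in> G})" for n z
    unfolding Sg_def \<phi>_def by (simp add: sum_subtractf card_sum_ind)
  have GA: "G \<subseteq> (\<Union>N. A N)"
  proof
    fix z assume z: "z \<in> G"
    obtain n where n: "n \<ge> 1" "real (card {i\<in>{..<n}. (T^^i) z \<in> G}) < \<delta> * real n"
      using H[OF z d0(1)] by auto
    have "0 < Sg \<phi> T n z" using n(2) by (simp add: Sg_eq mult.commute)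
    also have "\<dots> \<le> Mx \<phi> T n z" by (rule Mx_ge) simp
    finally have "z \<in> A n" using z sets.sets_into_space[OF G] by (auto simp: A_def)
    then show "z \<in> (\<Union>N. A N)" by blast
  qed
  have bound: "measure M (A N \<inter> G) \<le> \<delta>" for N
  proof -
    have "0 \<le> (\<integral>z. indicator (A N) z * \<phi> z \<partial>M)"
      using maximal_ergodic[OF P T inv phim phib, of N] by (simp add: A_def)
    also have "(\<lambda>z. indicator (A N) z * \<phi> z) = (\<lambda>z. \<delta> * indicator (A N) z - indicator (A N \<inter> G) z)"
      by (auto simp: \<phi>_def indicator_def fun_eq_iff)
    also have "(\<integral>z. \<delta> * indicator (A N) z - indicator (A N \<inter> G) z \<partial>M) = \<delta> * measure M (A N) - measure M (A N \<inter> G)"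
      using G by (subst Bochner_Integration.integral_diff) (auto intro!: integrable_real_indicator simp: less_top[symmetric])
    finally have "measure M (A N \<inter> G) \<le> \<delta> * measure M (A N)" by simp
    also have "\<dots> \<le> \<delta>" using d0 prob_le_1[of "A N"] by (simp add: mult_left_le)
    finally show ?thesis .
  qed
  have inc: "incseq (\<lambda>N. A N \<inter> G)"
    unfolding incseq_def A_def
  proof (intro allI impI subsetI)
    fix m n :: nat and z assume "m \<le> n" "z \<in> {z \<in> space M. 0 < Mx \<phi> T m z} \<inter> G"
    then show "z \<in> {z \<in> space M. 0 < Mx \<phi> T n z} \<inter> G"
      using Mx_mono[of m n \<phi> T z] by auto
  qed
  have lim: "(\<lambda>N. measure M (A N \<inter> G)) \<longlonglongrightarrow> measure M (\<Union>N. A N \<inter> G)"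
    by (rule finite_Lim_measure_incseq) (use inc G in auto)
  have "(\<Union>N. A N \<inter> G) = G" using GA by blast
  then have "measure M G \<le> \<delta>" using lim bound by (metis LIMSEQ_le_const2)
  then show False using d0 by (simp add: \<delta>_def)
qed

definition Wset :: "('a::metric_space \<Rightarrow> 'a) \<Rightarrow> 'a \<Rightarrow> 'a set" where
  "Wset f x = {y \<in> omega_limit f x. \<forall>\<epsilon>>0. lower_density (visit_times f y (ball y \<epsilon>)) > 0}"

lemma Wset_iff: "y \<in> Wset f x \<longleftrightarrow> y \<in> omega_limit f x \<and> (\<forall>\<epsilon>>0. posdens (visit_times f y (ball y \<epsilon>)))"
  unfolding Wset_def lower_density_pos_iff by simp

lemma card_visit_le: "(S::nat set) \<subseteq> T \<Longrightarrow> card (S \<inter> {0..<n}) \<le> card (T \<inter> {0..<n}) + 0"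
proof -
  assume "S \<subseteq> T"
  then have "S \<inter> {0..<n} \<subseteq> T \<inter> {0..<n}" by blast
  moreover have "finite (T \<inter> {0..<n})" by simp
  ultimately show ?thesis by (metis card_mono add_0_right)
qed

lemma visit_mono:
  assumes "\<rho> \<le> \<rho>'" "posdens (visit_times f z (ball z \<rho>))"
  shows "posdens (visit_times f z (ball z \<rho>'))"
proof (rule posdens_mono_shift[OF assms(2), where k=0])
  fix n
  have "visit_times f z (ball z \<rho>) \<subseteq> visit_times f z (ball z \<rho>')"
    using assms(1) by (auto simp: visit_times_def)
  then show "card (visit_times f z (ball z \<rho>) \<inter> {0..<n}) \<le> card (visit_times f z (ball z \<rho>') \<inter> {0..<n}) + 0"
    by (intro card_visit_le) auto
qed

lemma W_inv:
  fixes f :: "'a::metric_space \<Rightarrow> 'a"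
  assumes cont: "continuous_on UNIV f" and y: "y \<in> Wset f x"
  shows "f y \<in> Wset f x"
proof -
  have yL: "y \<in> omega_limit f x" using y by (simp add: Wset_iff)
  have "posdens (visit_times f (f y) (ball (f y) \<epsilon>))" if "\<epsilon> > 0" for \<epsilon>
  proof -
    have "isCont f y" using cont by (simp add: continuous_on_eq_continuous_at)
    then obtain \<delta> where d: "\<delta> > 0" "\<And>z. dist z y < \<delta> \<Longrightarrow> dist (f z) (f y) < \<epsilon>"
      using \<open>\<epsilon> > 0\<close> unfolding continuous_at_eps_delta by blast
    have pd: "posdens (visit_times f y (ball y \<delta>))" using y d(1) by (simp add: Wset_iff)
    show ?thesis
    proof (rule posdens_mono_shift[OF pd, where k=0])
      fix n
      have "visit_times f y (ball y \<delta>) \<subseteq> visit_times f (f y) (ball (f y) \<epsilon>)"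
      proof
        fix m assume "m \<in> visit_times f y (ball y \<delta>)"
        then have m: "m \<ge> 1" "dist y ((f ^^ m) y) < \<delta>" by (auto simp: visit_times_def)
        have "dist (f ((f ^^ m) y)) (f y) < \<epsilon>" using d(2)[of "(f ^^ m) y"] m(2) by (simp add: dist_commute)
        moreover have "(f ^^ m) (f y) = f ((f ^^ m) y)" by (simp add: funpow_swap1)
        ultimately show "m \<in> visit_times f (f y) (ball (f y) \<epsilon>)"
          using m(1) by (auto simp: visit_times_def dist_commute)
      qed
      then show "card (visit_times f y (ball y \<delta>) \<inter> {0..<n}) \<le> card (visit_times f (f y) (ball (f y) \<epsilon>) \<inter> {0..<n}) + 0"
        by (intro card_visit_le) auto
    qed
  qed
  then show ?thesis using omega_limit_invariant[OF cont yL] by (simp add: Wset_iff)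
qed

lemma W_sub: "Wset f x \<subseteq> omega_limit f x"
  by (auto simp: Wset_def)

lemma closureW_props:
  fixes f :: "'a::metric_space \<Rightarrow> 'a"
  assumes cont: "continuous_on UNIV f"
  shows "closure (Wset f x) \<subseteq> omega_limit f x" "closed (closure (Wset f x))"
    "f ` closure (Wset f x) \<subseteq> closure (Wset f x)"
proof -
  show "closure (Wset f x) \<subseteq> omega_limit f x"
    using closure_minimal[OF W_sub closed_omega_limit] .
  show "closed (closure (Wset f x))" by simp
  have "f ` Wset f x \<subseteq> Wset f x" using W_inv[OF cont] by blast
  also have "\<dots> \<subseteq> closure (Wset f x)" by (rule closure_subset)
  finally show "f ` closure (Wset f x) \<subseteq> closure (Wset f x)"
    by (intro image_closure_subset) (use continuous_on_subset[OF cont] in auto)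
qed

lemma inv_basic:
  fixes f :: "'a::metric_space \<Rightarrow> 'a"
  assumes cont: "continuous_on UNIV f" and fL: "f ` L \<subseteq> L" and mu: "\<mu> \<in> invariant_measures f L"
  shows "sets \<mu> = sets (restrict_space borel L)" "space \<mu> = L" "prob_space \<mu>"
    "f \<in> measurable \<mu> \<mu>" "distr \<mu> \<mu> f = \<mu>"
proof -
  show ss: "sets \<mu> = sets (restrict_space borel L)" using mu by (simp add: invariant_measures_def)
  show sp: "space \<mu> = L" using sets_eq_imp_space_eq[OF ss] by (simp add: space_restrict_space)
  show "prob_space \<mu>" using mu by (simp add: invariant_measures_def)
  have fb: "f \<in> borel_measurable borel" using cont by (rule borel_measurable_continuous_onI)
  have "f \<in> measurable (restrict_space borel L) (restrict_space borel L)"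
    by (rule measurable_restrict_space3[OF fb]) (use fL in auto)
  then show fm: "f \<in> measurable \<mu> \<mu>" by (simp add: measurable_cong_sets[OF ss ss])
  show "distr \<mu> \<mu> f = \<mu>"
  proof (rule measure_eqI)
    show "sets (distr \<mu> \<mu> f) = sets \<mu>" by simp
    fix A assume "A \<in> sets (distr \<mu> \<mu> f)"
    then have A: "A \<in> sets \<mu>" by simp
    have "emeasure (distr \<mu> \<mu> f) A = emeasure \<mu> (f -` A \<inter> space \<mu>)" by (rule emeasure_distr[OF fm A])
    also have "\<dots> = emeasure \<mu> A" using mu A sp by (simp add: invariant_measures_def)
    finally show "emeasure (distr \<mu> \<mu> f) A = emeasure \<mu> A" .
  qed
qed

lemma continuous_funpow:
  fixes f :: "'a::topological_space \<Rightarrow> 'a"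
  assumes "continuous_on UNIV f" shows "continuous_on UNIV (f ^^ n)"
proof (induction n)
  case 0 then show ?case by (simp add: continuous_on_id)
next
  case (Suc n)
  have "f ^^ Suc n = f \<circ> (f ^^ n)" by simp
  then show ?case using continuous_on_compose[OF Suc continuous_on_subset[OF assms]] by simp
qed

lemma posdens_nat:
  "posdens S \<longleftrightarrow> (\<exists>j::nat. \<exists>N::nat. \<forall>n\<ge>N. real n / real (Suc j) \<le> real (card (S \<inter> {0..<n})))"
proof
  assume "posdens S"
  then obtain c where c: "c > 0" "\<forall>\<^sub>F n in sequentially. c * real n \<le> real (card (S \<inter> {0..<n}))"
    unfolding posdens_def by blast
  obtain j :: nat where j: "1 / real (Suc j) < c"
    using c(1) by (metis nat_approx_posE)
  obtain N where N: "\<forall>n\<ge>N. c * real n \<le> real (card (S \<inter> {0..<n}))"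
    using c(2) unfolding eventually_sequentially by blast
  have "real n / real (Suc j) \<le> real (card (S \<inter> {0..<n}))" if "n \<ge> N" for n
  proof -
    have "real n / real (Suc j) = (1 / real (Suc j)) * real n" by simp
    also have "\<dots> \<le> c * real n" using j by (intro mult_right_mono) auto
    also have "\<dots> \<le> real (card (S \<inter> {0..<n}))" using N that by blast
    finally show ?thesis .
  qed
  then show "\<exists>j::nat. \<exists>N::nat. \<forall>n\<ge>N. real n / real (Suc j) \<le> real (card (S \<inter> {0..<n}))" by blast
next
  assume "\<exists>j::nat. \<exists>N::nat. \<forall>n\<ge>N. real n / real (Suc j) \<le> real (card (S \<inter> {0..<n}))"
  then obtain j N where jN: "\<forall>n\<ge>N. real n / real (Suc j) \<le> real (card (S \<inter> {0..<n}))" by blast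
  have "\<forall>\<^sub>F n in sequentially. (1 / real (Suc j)) * real n \<le> real (card (S \<inter> {0..<n}))"
    unfolding eventually_sequentially using jN by auto
  then show "posdens S" unfolding posdens_def by (intro exI[of _ "1 / real (Suc j)"]) auto
qed

lemma card_visits_sum:
  "real (card (visit_times f z B \<inter> {0..<n})) = (\<Sum>i\<in>{1..<n}. if (f ^^ i) z \<in> B then 1 else 0)"
proof -
  have "visit_times f z B \<inter> {0..<n} = {i\<in>{1..<n}. (f ^^ i) z \<in> B}"
    by (auto simp: visit_times_def)
  then show ?thesis by (simp add: sum.If_cases Int_def)
qed

lemma full_measure:
  fixes f :: "'a::metric_space \<Rightarrow> 'a"
  assumes cpt: "compact (UNIV::'a set)" and cont: "continuous_on UNIV f"
    and mu: "\<mu> \<in> invariant_measures f (omega_limit f x)"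
  shows "emeasure \<mu> (closure (Wset f x)) = 1"
proof -
  let ?L = "omega_limit f x"
  let ?C = "closure (Wset f x)"
  have fL: "f ` ?L \<subseteq> ?L" using omega_limit_invariant[OF cont] by blast
  note b = inv_basic[OF cont fL mu]
  interpret prob_space \<mu> by (rule b(3))
  have setsL: "A \<inter> ?L \<in> sets \<mu>" if "A \<in> sets borel" for A
    using that b(1) by (auto simp: sets_restrict_space)
  have bm: "g \<in> borel_measurable \<mu>" if "g \<in> borel_measurable borel" for g :: "'a \<Rightarrow> real"
    using measurable_restrict_space1[OF that, of ?L] by (subst measurable_cong_sets[OF b(1) refl])
  have CL: "?C \<subseteq> ?L" using closureW_props[OF cont] by blast
  have Cs: "?C \<in> sets \<mu>"
    using setsL[of ?C] CL by (simp add: Int_absorb2)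
  show ?thesis
  proof (rule ccontr)
    assume ne: "emeasure \<mu> ?C \<noteq> 1"
    define V where "V = ?L - ?C"
    have Vs: "V \<in> sets \<mu>" unfolding V_def using Cs b(2) by (metis sets.compl_sets)
    have "prob ?C \<noteq> 1" using ne by (simp add: emeasure_eq_measure)
    then have "prob ?C < 1" using prob_le_1[of ?C] by linarith
    moreover have "prob V = 1 - prob ?C" unfolding V_def using prob_compl[OF Cs] b(2) by simp
    ultimately have Vpos: "prob V > 0" by simp
    define E where "E k = {z \<in> V. \<not> posdens (visit_times f z (ball z (1 / real (Suc k))))}" for k :: nat
    have Em: "E k \<in> sets \<mu>" for k
    proof -
      let ?r = "1 / real (Suc k)"
      define cnt where "cnt n z = (\<Sum>i\<in>{1..<n}. if (f ^^ i) z \<in> ball z ?r then 1 else 0 :: real)" for n z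
      have dm: "(\<lambda>z. dist z ((f ^^ i) z)) \<in> borel_measurable \<mu>" for i
        by (intro bm borel_measurable_continuous_onI continuous_intros continuous_funpow[OF cont])
      have cm[measurable]: "cnt n \<in> borel_measurable \<mu>" for n
        unfolding cnt_def[abs_def] mem_ball using dm by measurable
      have P: "{z \<in> space \<mu>. posdens (visit_times f z (ball z ?r))} =
          {z \<in> space \<mu>. \<exists>j::nat. \<exists>N::nat. \<forall>n\<ge>N. real n / real (Suc j) \<le> cnt n z}"
        unfolding posdens_nat cnt_def card_visits_sum ..
      have "{z \<in> space \<mu>. \<exists>j::nat. \<exists>N::nat. \<forall>n\<ge>N. real n / real (Suc j) \<le> cnt n z} \<in> sets \<mu>"
        by measurable
      then have "{z \<in> space \<mu>. posdens (visit_times f z (ball z ?r))} \<in> sets \<mu>" using P by simp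
      moreover have "E k = V - {z \<in> space \<mu>. posdens (visit_times f z (ball z ?r))}"
        using sets.sets_into_space[OF Vs] by (auto simp: E_def)
      ultimately show ?thesis using Vs by auto
    qed
    have VE: "V \<subseteq> (\<Union>k. E k)"
    proof
      fix z assume zV: "z \<in> V"
      then have zL: "z \<in> ?L" and zW: "z \<notin> Wset f x" using closure_subset[of "Wset f x"] by (auto simp: V_def)
      then obtain \<epsilon> where e: "\<epsilon> > 0" "\<not> posdens (visit_times f z (ball z \<epsilon>))"
        by (auto simp: Wset_iff)
      obtain k :: nat where k: "1 / real (Suc k) < \<epsilon>" using e(1) by (metis nat_approx_posE)
      have "\<not> posdens (visit_times f z (ball z (1 / real (Suc k))))"
        using visit_mono[of "1 / real (Suc k)" \<epsilon> f z] k e(2) by auto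
      then show "z \<in> (\<Union>k. E k)" using zV by (auto simp: E_def)
    qed
    obtain k where Ek: "prob (E k) > 0"
    proof (rule ccontr)
      assume "\<not> thesis"
      then have "\<not> prob (E k) > 0" for k using that by blast
      then have "prob (E k) = 0" for k using measure_nonneg[of \<mu> "E k"] by (meson linorder_neqE_linordered_idom not_less)
      then have "E k \<in> null_sets \<mu>" for k using Em by (simp add: null_sets_def emeasure_eq_measure)
      then have "(\<Union>k. E k) \<in> null_sets \<mu>" by (intro null_sets_UN) 
      then have "V \<in> null_sets \<mu>" using VE Vs by (metis null_sets_subset)
      then show False using Vpos by (simp add: null_sets_def emeasure_eq_measure)
    qed
    define \<rho> where "\<rho> = 1 / (2 * real (Suc k))"
    have rho: "\<rho> > 0" "2 * \<rho> = 1 / real (Suc k)" by (auto simp: \<rho>_def field_simps)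
    obtain F :: "'a set" where F: "finite F" "UNIV \<subseteq> (\<Union>c\<in>F. ball c \<rho>)"
    proof (rule compactE_image[OF cpt, of UNIV "\<lambda>c. ball c \<rho>"])
      show "UNIV \<subseteq> (\<Union>c\<in>UNIV. ball c \<rho>)" using rho(1) by (auto intro: centre_in_ball[THEN iffD2])
      show "\<And>T. T \<in> UNIV \<Longrightarrow> open (ball T \<rho>)" by simp
      fix C' :: "'a set" assume "C' \<subseteq> UNIV" "finite C'" "UNIV \<subseteq> (\<Union>c\<in>C'. ball c \<rho>)"
      then show thesis by (intro that[of C'])
    qed
    obtain c where Gpos: "prob (E k \<inter> ball c \<rho>) > 0"
    proof (rule ccontr)
      assume "\<not> thesis"
      then have "\<not> prob (E k \<inter> ball c \<rho>) > 0" for c using that by blast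
      then have "prob (E k \<inter> ball c \<rho>) = 0" for c using measure_nonneg[of \<mu> "E k \<inter> ball c \<rho>"] by (meson linorder_neqE_linordered_idom not_less)
      moreover have "E k \<inter> ball c \<rho> \<in> sets \<mu>" for c
      proof -
        have "E k \<inter> ball c \<rho> = E k \<inter> (ball c \<rho> \<inter> ?L)" using sets.sets_into_space[OF Em[of k]] b(2) by auto
        then show ?thesis using Em setsL[of "ball c \<rho>"] by auto
      qed
      ultimately have "E k \<inter> ball c \<rho> \<in> null_sets \<mu>" for c by (simp add: null_sets_def emeasure_eq_measure)
      then have "(\<Union>c\<in>F. E k \<inter> ball c \<rho>) \<in> null_sets \<mu>" using F(1) by (intro null_sets.finite_UN) auto
      moreover have "(\<Union>c\<in>F. E k \<inter> ball c \<rho>) = E k" using F(2) by blast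
      ultimately show False using Ek by (simp add: null_sets_def emeasure_eq_measure)
    qed
    define G where "G = E k \<inter> ball c \<rho>"
    have Gs: "G \<in> sets \<mu>"
    proof -
      have "G = E k \<inter> (ball c \<rho> \<inter> ?L)" using sets.sets_into_space[OF Em[of k]] b(2) by (auto simp: G_def)
      then show ?thesis using Em setsL[of "ball c \<rho>"] by auto
    qed
    obtain z \<delta> where z: "z \<in> G" "\<delta> > 0" "\<And>n. n \<ge> 1 \<Longrightarrow> \<delta> * real n \<le> real (card {i\<in>{..<n}. (f^^i) z \<in> G})"
      using recurrence_density[OF b(3) b(4) b(5) Gs] Gpos unfolding G_def by blast
    define S where "S = {i. (f^^i) z \<in> G}"
    have "posdens S"
      unfolding posdens_def
    proof (intro exI[of _ \<delta>] conjI)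
      show "\<delta> > 0" by fact
      show "\<forall>\<^sub>F n in sequentially. \<delta> * real n \<le> real (card (S \<inter> {0..<n}))"
        unfolding eventually_sequentially
      proof (intro exI[of _ 1] allI impI)
        fix n :: nat assume "n \<ge> 1"
        moreover have "{i\<in>{..<n}. (f^^i) z \<in> G} = S \<inter> {0..<n}" by (auto simp: S_def)
        ultimately show "\<delta> * real n \<le> real (card (S \<inter> {0..<n}))" using z(3) by metis
      qed
    qed
    then have "posdens (visit_times f z (ball z (1 / real (Suc k))))"
    proof (rule posdens_mono_shift[where k=1])
      fix n
      let ?V = "visit_times f z (ball z (1 / real (Suc k)))"
      have "S \<inter> {0..<n} \<subseteq> insert 0 (?V \<inter> {0..<n})"
      proof
        fix i assume i: "i \<in> S \<inter> {0..<n}"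
        show "i \<in> insert 0 (?V \<inter> {0..<n})"
        proof (cases "i = 0")
          case False
          have "(f^^i) z \<in> ball c \<rho>" "z \<in> ball c \<rho>" using i z(1) by (auto simp: S_def G_def)
          then have "dist z ((f^^i) z) < 2 * \<rho>"
            using dist_triangle[of z "(f^^i) z" c] dist_commute[of z c] by (simp add: mem_ball)
          then show ?thesis using False i rho(2) by (auto simp: visit_times_def)
        qed simp
      qed
      then have "card (S \<inter> {0..<n}) \<le> card (insert 0 (?V \<inter> {0..<n}))"
        by (intro card_mono) auto
      also have "\<dots> \<le> card (?V \<inter> {0..<n}) + 1" by (simp add: card_insert_if)
      finally show "card (S \<inter> {0..<n}) \<le> card (?V \<inter> {0..<n}) + 1" .
    qed
    moreover have "z \<in> E k" using z(1) by (simp add: G_def)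
    ultimately show False by (simp add: E_def)
  qed
qed

definition wt :: "nat \<Rightarrow> real" where "wt m = 2 / 3 ^ Suc m"

lemma wt_eq: "wt (n + k) = (2 / 3 ^ Suc k) * (1/3) ^ n"
  by (simp add: wt_def power_add field_simps)

lemma summable_wt_shift: "summable (\<lambda>n. wt (n + k))"
  unfolding wt_eq by (intro summable_mult summable_geometric) simp

lemma summable_wt: "summable wt"
  using summable_wt_shift[of 0] by simp

lemma tail_wt: "(\<Sum>n. wt (n + k)) = 1 / 3 ^ k"
proof -
  have "(\<Sum>n. wt (n + k)) = (2 / 3 ^ Suc k) * (\<Sum>n. (1/3::real) ^ n)"
    unfolding wt_eq by (intro suminf_mult summable_geometric) simp
  also have "(\<Sum>n. (1/3::real) ^ n) = 3 / 2" by (subst suminf_geometric) auto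
  finally show ?thesis by simp
qed

definition code :: "(nat \<Rightarrow> bool) \<Rightarrow> real" where
  "code P = (\<Sum>m. if P m then wt m else 0)"

lemma wt_pos: "wt m > 0" by (simp add: wt_def)

lemma summable_code: "summable (\<lambda>m. if P m then wt m else 0)"
  by (rule summable_comparison_test'[OF summable_wt, of 0]) (use wt_pos in \<open>auto simp: less_imp_le\<close>)

lemma code_bounds: "0 \<le> code P" "code P \<le> 1"
proof -
  show "0 \<le> code P" unfolding code_def
    by (intro suminf_nonneg summable_code) (use wt_pos in \<open>auto simp: less_imp_le\<close>)
  have "code P \<le> (\<Sum>m. wt m)" unfolding code_def
    by (intro suminf_le summable_code summable_wt) (use wt_pos in \<open>auto simp: less_imp_le\<close>)
  also have "\<dots> = 1" using tail_wt[of 0] by simp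
  finally show "code P \<le> 1" .
qed

lemma code_gap:
  assumes "\<bar>code P - code Q\<bar> < 1 / 3 ^ Suc M"
  shows "\<forall>m\<le>M. P m = Q m"
proof (rule ccontr)
  assume "\<not> ?thesis"
  then have ex: "\<exists>m. m \<le> M \<and> P m \<noteq> Q m" by blast
  define m0 where "m0 = (LEAST m. m \<le> M \<and> P m \<noteq> Q m)"
  have m0: "m0 \<le> M" "P m0 \<noteq> Q m0" using LeastI_ex[OF ex] by (auto simp: m0_def)
  have below: "P j = Q j" if "j < m0" for j
    using not_less_Least[of j "\<lambda>m. m \<le> M \<and> P m \<noteq> Q m"] that m0(1) by (auto simp: m0_def)
  define d where "d m = (if P m then wt m else 0) - (if Q m then wt m else 0)" for m
  have sd: "summable d" unfolding d_def by (intro summable_diff summable_code)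
  have D: "code P - code Q = (\<Sum>m. d m)"
    unfolding code_def d_def by (rule suminf_diff) (rule summable_code)+
  also have "\<dots> = (\<Sum>n. d (n + Suc m0)) + sum d {..<Suc m0}"
    by (rule suminf_split_initial_segment[OF sd])
  also have "sum d {..<Suc m0} = d m0"
    using below by (simp add: d_def)
  finally have eq: "code P - code Q = (\<Sum>n. d (n + Suc m0)) + d m0" .
  have "\<bar>\<Sum>n. d (n + Suc m0)\<bar> \<le> (\<Sum>n. wt (n + Suc m0))"
  proof -
    have "norm (d (n + Suc m0)) \<le> wt (n + Suc m0)" for n
      using wt_pos[of "n + Suc m0"] by (auto simp: d_def)
    then have "norm (\<Sum>n. d (n + Suc m0)) \<le> (\<Sum>n. wt (n + Suc m0))"
      by (rule norm_suminf_le) (rule summable_wt_shift)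
    then show ?thesis by simp
  qed
  also have "\<dots> = 1 / 3 ^ Suc m0" by (rule tail_wt)
  finally have tail: "\<bar>\<Sum>n. d (n + Suc m0)\<bar> \<le> 1 / 3 ^ Suc m0" .
  have dm0: "\<bar>d m0\<bar> = 2 / 3 ^ Suc m0" using m0(2) by (auto simp: d_def wt_def)
  have "1 / 3 ^ Suc m0 \<le> \<bar>code P - code Q\<bar>" using eq tail dm0 by linarith
  moreover have "1 / (3::real) ^ Suc M \<le> 1 / 3 ^ Suc m0"
    using m0(1) by (intro divide_left_mono power_increasing) auto
  ultimately show False using assms by linarith
qed

lemma finite_net:
  fixes r :: real
  assumes cpt: "compact (UNIV :: 'a::metric_space set)" and r: "r > 0"
  obtains C :: "'a::metric_space set" where "finite C" "UNIV \<subseteq> (\<Union>c\<in>C. ball c r)"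
proof (rule compactE_image[OF cpt, of UNIV "\<lambda>c. ball c r"])
  show "UNIV \<subseteq> (\<Union>c\<in>UNIV. ball c r)" using r by (auto intro: centre_in_ball[THEN iffD2])
  show "\<And>T. T \<in> UNIV \<Longrightarrow> open (ball T r)" by simp
  fix C' :: "'a set" assume "C' \<subseteq> UNIV" "finite C'" "UNIV \<subseteq> (\<Union>c\<in>C'. ball c r)"
  then show thesis by (intro that[of C'])
qed

lemma coding:
  assumes cpt: "compact (UNIV :: 'a::metric_space set)"
  obtains \<theta> :: "'a::metric_space \<Rightarrow> real" where "\<And>z. 0 \<le> \<theta> z" "\<And>z. \<theta> z \<le> 1"
    "\<And>e. e > 0 \<Longrightarrow> \<exists>\<delta>>0. \<forall>z z'. \<bar>\<theta> z - \<theta> z'\<bar> < \<delta> \<longrightarrow> dist z z' < e"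
proof -
  have "\<forall>k::nat. \<exists>C::'a set. finite C \<and> UNIV \<subseteq> (\<Union>c\<in>C. ball c (1 / real (Suc k)))"
  proof
    fix k :: nat
    obtain C :: "'a set" where "finite C" "UNIV \<subseteq> (\<Union>c\<in>C. ball c (1 / real (Suc k)))"
      using finite_net[OF cpt, of "1 / real (Suc k)"] by auto
    then show "\<exists>C::'a set. finite C \<and> UNIV \<subseteq> (\<Union>c\<in>C. ball c (1 / real (Suc k)))" by blast
  qed
  then obtain C :: "nat \<Rightarrow> 'a set" where C: "\<And>k. finite (C k)" "\<And>k. UNIV \<subseteq> (\<Union>c\<in>C k. ball c (1 / real (Suc k)))"
    by metis
  define BB where "BB = (\<Union>k. (\<lambda>c. ball c (1 / real (Suc k))) ` C k)"
  have cBB: "countable BB" unfolding BB_def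
    by (intro countable_UN countable_image) (auto intro: countable_finite C(1))
  obtain z0 :: 'a where True by simp
  have "z0 \<in> (\<Union>c\<in>C 0. ball c (1 / real (Suc 0)))" using C(2)[of 0] by blast
  then have neBB: "BB \<noteq> {}" unfolding BB_def by blast
  define b where "b = from_nat_into BB"
  define \<theta> where "\<theta> z = code (\<lambda>m. z \<in> b m)" for z
  show ?thesis
  proof (rule that[of \<theta>])
    show "0 \<le> \<theta> z" "\<theta> z \<le> 1" for z unfolding \<theta>_def using code_bounds by auto
    fix e :: real assume e: "e > 0"
    obtain k :: nat where k: "1 / real (Suc k) < e / 2" using e by (metis half_gt_zero nat_approx_posE)
    let ?r = "1 / real (Suc k)"
    let ?I = "to_nat_on BB ` (\<lambda>c. ball c ?r) ` C k"
    define M where "M = Max (insert 0 ?I)"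
    have finI: "finite (insert 0 ?I)" using C(1) by simp
    show "\<exists>\<delta>>0. \<forall>z z'. \<bar>\<theta> z - \<theta> z'\<bar> < \<delta> \<longrightarrow> dist z z' < e"
    proof (intro exI[of _ "1 / 3 ^ Suc M"] conjI allI impI)
      show "(0::real) < 1 / 3 ^ Suc M" by simp
      fix z z' :: 'a assume "\<bar>\<theta> z - \<theta> z'\<bar> < 1 / 3 ^ Suc M"
      then have agree: "\<forall>m\<le>M. (z \<in> b m) = (z' \<in> b m)" unfolding \<theta>_def by (rule code_gap)
      obtain c where c: "c \<in> C k" "z \<in> ball c ?r" using C(2)[of k] by blast
      have inBB: "ball c ?r \<in> BB" unfolding BB_def using c(1) by blast
      define m where "m = to_nat_on BB (ball c ?r)"
      have bm: "b m = ball c ?r" unfolding b_def m_def by (rule from_nat_into_to_nat_on[OF cBB inBB])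
      have "m \<in> insert 0 ?I" unfolding m_def using c(1) by blast
      then have "m \<le> M" unfolding M_def using finI by (rule Max_ge[rotated])
      then have "z' \<in> ball c ?r" using agree c(2) bm by auto
      then have "dist z z' < 2 * ?r" using c(2) dist_triangle[of z z' c] dist_commute[of z c] by (simp add: mem_ball)
      then show "dist z z' < e" using k by linarith
    qed
  qed
qed

definition Pr :: "('a::metric_space \<Rightarrow> real) \<Rightarrow> real \<Rightarrow> 'a \<Rightarrow> bool" where
  "Pr \<theta> t z \<longleftrightarrow> (\<forall>e>0. \<exists>\<delta>>0. \<forall>w. \<bar>\<theta> w - t\<bar> < \<delta> \<longrightarrow> dist w z < e)"

definition decode :: "('a::metric_space \<Rightarrow> real) \<Rightarrow> real \<Rightarrow> 'a" where
  "decode \<theta> t = (SOME z. Pr \<theta> t z)"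

lemma Pr_exists:
  fixes \<theta> :: "'a::metric_space \<Rightarrow> real"
  assumes cpt: "compact (UNIV :: 'a set)"
    and H: "\<And>e. e > 0 \<Longrightarrow> \<exists>\<delta>>0. \<forall>z z'. \<bar>\<theta> z - \<theta> z'\<bar> < \<delta> \<longrightarrow> dist z z' < e"
    and t: "t \<in> closure (range \<theta>)"
  shows "Pr \<theta> t (decode \<theta> t)"
proof -
  obtain s where s: "\<And>n. s n \<in> range \<theta>" "s \<longlonglongrightarrow> t" using t closure_sequential by metis
  define w where "w n = (SOME z. \<theta> z = s n)" for n
  have w: "\<theta> (w n) = s n" for n unfolding w_def using s(1)[of n] by (metis (mono_tags, lifting) imageE someI)
  obtain l r where lr: "strict_mono r" "(w \<circ> r) \<longlonglongrightarrow> l"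
    using seq_compactE[OF compact_imp_seq_compact[OF cpt], of w] by blast
  have str: "(\<lambda>k. \<theta> (w (r k))) \<longlonglongrightarrow> t"
    using LIMSEQ_subseq_LIMSEQ[OF s(2) lr(1)] by (simp add: w comp_def)
  have "Pr \<theta> t l"
    unfolding Pr_def
  proof (intro allI impI)
    fix e :: real assume e: "e > 0"
    obtain \<delta> where d: "\<delta> > 0" "\<And>z z'. \<bar>\<theta> z - \<theta> z'\<bar> < \<delta> \<Longrightarrow> dist z z' < e / 2"
      using H[of "e/2"] e by auto
    obtain K1 where K1: "\<And>k. k \<ge> K1 \<Longrightarrow> dist (\<theta> (w (r k))) t < \<delta> / 2"
      using metric_LIMSEQ_D[OF str, of "\<delta>/2"] d(1) by auto
    obtain K2 where K2: "\<And>k. k \<ge> K2 \<Longrightarrow> dist ((w \<circ> r) k) l < e / 2"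
      using metric_LIMSEQ_D[OF lr(2), of "e/2"] e by auto
    let ?k = "max K1 K2"
    show "\<exists>\<delta>>0. \<forall>w'. \<bar>\<theta> w' - t\<bar> < \<delta> \<longrightarrow> dist w' l < e"
    proof (intro exI[of _ "\<delta>/2"] conjI allI impI)
      show "\<delta> / 2 > 0" using d(1) by simp
      fix w' assume w': "\<bar>\<theta> w' - t\<bar> < \<delta> / 2"
      have "\<bar>\<theta> (w (r ?k)) - t\<bar> < \<delta> / 2" using K1[of ?k] by (simp add: dist_real_def)
      then have "\<bar>\<theta> w' - \<theta> (w (r ?k))\<bar> < \<delta>" using w' by linarith
      then have "dist w' (w (r ?k)) < e / 2" by (rule d(2))
      moreover have "dist (w (r ?k)) l < e / 2" using K2[of ?k] by simp
      ultimately show "dist w' l < e" using dist_triangle[of w' l "w (r ?k)"] by linarith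
    qed
  qed
  then show ?thesis unfolding decode_def by (rule someI)
qed

lemma decode_inverse:
  fixes \<theta> :: "'a::metric_space \<Rightarrow> real"
  assumes cpt: "compact (UNIV :: 'a set)"
    and H: "\<And>e. e > 0 \<Longrightarrow> \<exists>\<delta>>0. \<forall>z z'. \<bar>\<theta> z - \<theta> z'\<bar> < \<delta> \<longrightarrow> dist z z' < e"
  shows "decode \<theta> (\<theta> z) = z"
proof -
  have P: "Pr \<theta> (\<theta> z) (decode \<theta> (\<theta> z))"
    by (rule Pr_exists[OF cpt H]) (auto intro: closure_subset[THEN subsetD])
  have "dist z (decode \<theta> (\<theta> z)) < e" if "e > 0" for e
    using P that unfolding Pr_def by fastforce
  then show ?thesis by (metis dist_pos_lt dist_commute less_irrefl)
qed

lemma decode_continuous: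
  fixes \<theta> :: "'a::metric_space \<Rightarrow> real"
  assumes cpt: "compact (UNIV :: 'a set)"
    and H: "\<And>e. e > 0 \<Longrightarrow> \<exists>\<delta>>0. \<forall>z z'. \<bar>\<theta> z - \<theta> z'\<bar> < \<delta> \<longrightarrow> dist z z' < e"
  shows "continuous_on (closure (range \<theta>)) (decode \<theta>)"
  unfolding continuous_on_iff
proof (intro ballI allI impI)
  fix t e assume t: "t \<in> closure (range \<theta>)" and e: "(e::real) > 0"
  obtain \<delta> where d: "\<delta> > 0" "\<And>w. \<bar>\<theta> w - t\<bar> < \<delta> \<Longrightarrow> dist w (decode \<theta> t) < e / 2"
    using Pr_exists[OF cpt H t] e unfolding Pr_def by (meson half_gt_zero)
  show "\<exists>d>0. \<forall>t'\<in>closure (range \<theta>). dist t' t < d \<longrightarrow> dist (decode \<theta> t') (decode \<theta> t) < e"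
  proof (intro exI[of _ "\<delta>/2"] conjI ballI impI)
    show "\<delta> / 2 > 0" using d(1) by simp
    fix t' assume t': "t' \<in> closure (range \<theta>)" "dist t' t < \<delta> / 2"
    obtain \<delta>' where d': "\<delta>' > 0" "\<And>w. \<bar>\<theta> w - t'\<bar> < \<delta>' \<Longrightarrow> dist w (decode \<theta> t') < e / 2"
      using Pr_exists[OF cpt H t'(1)] e unfolding Pr_def by (meson half_gt_zero)
    obtain s where s: "s \<in> range \<theta>" "dist s t' < min \<delta>' (\<delta>/2)"
      using t'(1) d(1) d'(1) unfolding closure_approachable by (metis min_less_iff_conj half_gt_zero)
    then obtain w where w: "\<theta> w = s" by blast
    have "\<bar>\<theta> w - t'\<bar> < \<delta>'" using s w by (simp add: dist_real_def)
    then have a: "dist w (decode \<theta> t') < e / 2" by (rule d'(2))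
    have "\<bar>\<theta> w - t\<bar> < \<delta>" using s w t'(2) unfolding dist_real_def by linarith
    then have b: "dist w (decode \<theta> t) < e / 2" by (rule d(2))
    show "dist (decode \<theta> t') (decode \<theta> t) < e"
      using a b dist_triangle[of "decode \<theta> t'" "decode \<theta> t" w] dist_commute[of w "decode \<theta> t'"] by linarith
  qed
qed

lemma decode_in_closure:
  fixes \<theta> :: "'a::metric_space \<Rightarrow> real"
  assumes cpt: "compact (UNIV :: 'a set)"
    and H: "\<And>e. e > 0 \<Longrightarrow> \<exists>\<delta>>0. \<forall>z z'. \<bar>\<theta> z - \<theta> z'\<bar> < \<delta> \<longrightarrow> dist z z' < e"
    and t: "t \<in> closure (\<theta> ` L)"
  shows "decode \<theta> t \<in> closure L"
  unfolding closure_approachable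
proof (intro allI impI)
  fix e :: real assume e: "e > 0"
  have t': "t \<in> closure (range \<theta>)" using t closure_mono[of "\<theta> ` L" "range \<theta>"] by auto
  obtain \<delta> where d: "\<delta> > 0" "\<And>w. \<bar>\<theta> w - t\<bar> < \<delta> \<Longrightarrow> dist w (decode \<theta> t) < e"
    using Pr_exists[OF cpt H t'] e unfolding Pr_def by meson
  obtain s where s: "s \<in> \<theta> ` L" "dist s t < \<delta>" using t d(1) unfolding closure_approachable by blast
  then obtain w where w: "w \<in> L" "\<theta> w = s" by blast
  have "dist w (decode \<theta> t) < e" using d(2)[of w] s w by (simp add: dist_real_def)
  then show "\<exists>y\<in>L. dist y (decode \<theta> t) < e" using w by blast
qed

definition apx :: "'b::metric_space set \<Rightarrow> nat \<Rightarrow> 'b \<Rightarrow> real" where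
  "apx F j t = max 0 (1 - real (Suc j) * infdist t F)"

lemma apx_cont: "continuous_on UNIV (apx F j)"
  unfolding apx_def[abs_def] by (intro continuous_intros continuous_on_infdist continuous_on_id)

lemma apx_bounds: "0 \<le> apx F j t" "apx F j t \<le> 1"
  unfolding apx_def using infdist_nonneg[of t F] by auto

lemma apx_ge: "indicator F t \<le> apx F j t"
  using apx_bounds[of F j t] by (cases "t \<in> F") (auto simp: apx_def indicator_def)

lemma apx_lim:
  assumes "closed F" "F \<noteq> {}"
  shows "(\<lambda>j. apx F j t) \<longlonglongrightarrow> indicator F t"
proof (cases "t \<in> F")
  case True then show ?thesis by (simp add: apx_def indicator_def)
next
  case False
  then have pos: "infdist t F > 0" using infdist_pos_not_in_closed assms by blast
  obtain J :: nat where J: "1 / infdist t F < real J" using reals_Archimedean2 by blast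
  have "\<forall>\<^sub>F j in sequentially. apx F j t = 0"
    unfolding eventually_sequentially
  proof (intro exI[of _ J] allI impI)
    fix j assume "J \<le> j"
    then have "1 / infdist t F < real (Suc j)" using J by linarith
    then have "1 < real (Suc j) * infdist t F" using pos by (simp add: field_simps)
    then show "apx F j t = 0" by (simp add: apx_def)
  qed
  then have "(\<lambda>j. apx F j t) \<longlonglongrightarrow> 0" by (rule tendsto_eventually)
  then show ?thesis using False by simp
qed

lemma integral_apx_lim:
  assumes fm: "finite_measure N" and F: "closed F" "F \<noteq> {}" "F \<in> sets N"
    and m: "\<And>j. apx F j \<in> borel_measurable N"
  shows "(\<lambda>j. integral\<^sup>L N (apx F j)) \<longlonglongrightarrow> measure N F"
proof -
  interpret finite_measure N by fact
  have "(\<lambda>j. integral\<^sup>L N (apx F j)) \<longlonglongrightarrow> (\<integral>t. indicator F t \<partial>N)"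
  proof (rule integral_dominated_convergence[where w="\<lambda>_. 1"])
    show "indicator F \<in> borel_measurable N" using F(3) by measurable
    show "apx F j \<in> borel_measurable N" for j by (rule m)
    show "integrable N (\<lambda>_. 1::real)" by simp
    show "AE t in N. (\<lambda>j. apx F j t) \<longlonglongrightarrow> indicator F t" using apx_lim[OF F(1,2)] by simp
    have "norm (apx F j t) \<le> 1" for j t using apx_bounds[of F j t] by simp
    then show "AE t in N. norm (apx F j t) \<le> 1" for j by simp
  qed
  then show ?thesis using F(3) by (simp add: less_top[symmetric])
qed

lemma rd_meas: "real_distribution M \<Longrightarrow> g \<in> borel_measurable borel \<Longrightarrow> g \<in> borel_measurable M"
  using measurable_cong_sets[OF real_distribution.events_eq_borel refl, of M borel] by blast

lemma weak_closed_lower: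
  fixes \<mu>s :: "nat \<Rightarrow> real measure"
  assumes D: "\<And>n. real_distribution (\<mu>s n)" and DM: "real_distribution M" and W: "weak_conv_m \<mu>s M"
    and F: "closed F" and ev: "\<forall>\<^sub>F n in sequentially. c \<le> measure (\<mu>s n) F"
  shows "c \<le> measure M F"
proof (cases "F = {}")
  case True
  have "\<forall>\<^sub>F n in sequentially. c \<le> 0" using ev by (simp add: True)
  then have "c \<le> 0" by (simp add: eventually_sequentially) (meson order_refl)
  then show ?thesis by (simp add: True)
next
  case False
  interpret M: real_distribution M by fact
  have Fb: "F \<in> sets borel" using F by simp
  have lb: "c \<le> integral\<^sup>L M (apx F j)" for j
  proof (rule tendsto_lowerbound)
    show "(\<lambda>n. integral\<^sup>L (\<mu>s n) (apx F j)) \<longlonglongrightarrow> integral\<^sup>L M (apx F j)"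
    proof (rule weak_conv_imp_integral_bdd_continuous_conv[OF D DM W])
      show "isCont (apx F j) x" for x using apx_cont[of F j] by (simp add: continuous_on_eq_continuous_at)
      show "norm (apx F j x) \<le> 1" for x using apx_bounds[of F j x] by simp
    qed
    show "\<forall>\<^sub>F n in sequentially. c \<le> integral\<^sup>L (\<mu>s n) (apx F j)"
      using ev
    proof eventually_elim
      case (elim n)
      interpret R: real_distribution "\<mu>s n" by (rule D)
      have "measure (\<mu>s n) F = (\<integral>t. indicator F t \<partial>\<mu>s n)" using Fb by (simp add: less_top[symmetric])
      also have "\<dots> \<le> integral\<^sup>L (\<mu>s n) (apx F j)"
      proof (rule integral_mono)
        show "integrable (\<mu>s n) (indicat_real F)" using Fb by (simp add: less_top[symmetric])
        show "integrable (\<mu>s n) (apx F j)"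
        proof (rule R.integrable_const_bound[where B=1])
          have "norm (apx F j t) \<le> 1" for t using apx_bounds[of F j t] by simp
          then show "AE x in \<mu>s n. norm (apx F j x) \<le> 1" by simp
          show "apx F j \<in> borel_measurable (\<mu>s n)"
            by (rule rd_meas[OF D borel_measurable_continuous_onI[OF apx_cont]])
        qed
        show "indicator F t \<le> apx F j t" for t by (rule apx_ge)
      qed
      finally show ?case using elim by linarith
    qed
  qed simp
  have "(\<lambda>j. integral\<^sup>L M (apx F j)) \<longlonglongrightarrow> measure M F"
    by (rule integral_apx_lim) (use False F in \<open>auto intro: rd_meas[OF DM] borel_measurable_continuous_onI[OF apx_cont]\<close>)
  then show ?thesis using lb by (intro tendsto_lowerbound) auto
qed

definition emp :: "(nat \<Rightarrow> real) \<Rightarrow> nat \<Rightarrow> real measure" where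
  "emp p n = distr (uniform_count_measure {..n}) borel p"

lemma ucm_meas: "p \<in> measurable (uniform_count_measure A) N \<longleftrightarrow> p \<in> A \<rightarrow> space N"
proof -
  have "measurable (uniform_count_measure A) N = measurable (count_space A) N"
    by (rule measurable_cong_sets) (simp_all add: sets_uniform_count_measure)
  then show ?thesis by simp
qed

lemma emp_rd: "real_distribution (emp p n)"
proof -
  interpret prob_space "uniform_count_measure {..n}" by (rule prob_space_uniform_count_measure) auto
  have "prob_space (emp p n)" unfolding emp_def by (rule prob_space_distr) (simp add: ucm_meas)
  then show ?thesis unfolding real_distribution_def real_distribution_axioms_def by (simp add: emp_def)
qed

lemma emp_integral:
  assumes "g \<in> borel_measurable borel"
  shows "integral\<^sup>L (emp p n) g = (\<Sum>i\<le>n. g (p i)) / real (Suc n)"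
proof -
  have "integral\<^sup>L (emp p n) g = (\<integral>i. g (p i) \<partial>uniform_count_measure {..n})"
    unfolding emp_def by (rule integral_distr) (simp_all add: ucm_meas assms)
  also have "\<dots> = (\<Sum>i\<le>n. g (p i)) / real (Suc n)" by (simp add: integral_uniform_count_measure)
  finally show ?thesis .
qed

lemma emp_measure:
  assumes "B \<in> sets borel"
  shows "measure (emp p n) B = real (card {i\<in>{..n}. p i \<in> B}) / real (Suc n)"
proof -
  have "measure (emp p n) B = measure (uniform_count_measure {..n}) (p -` B \<inter> {..n})"
    unfolding emp_def by (subst measure_distr) (simp_all add: ucm_meas assms space_uniform_count_measure)
  also have "p -` B \<inter> {..n} = {i\<in>{..n}. p i \<in> B}" by auto
  also have "measure (uniform_count_measure {..n}) {i\<in>{..n}. p i \<in> B} = real (card {i\<in>{..n}. p i \<in> B}) / real (Suc n)"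
    by (subst measure_uniform_count_measure) auto
  finally show ?thesis .
qed

lemma emp_tight:
  assumes "\<And>i. 0 \<le> p i \<and> p i \<le> 1"
  shows "tight (emp p)"
  unfolding tight_def
proof (intro conjI allI impI)
  show "real_distribution (emp p n)" for n by (rule emp_rd)
  fix e :: real assume "e > 0"
  have "measure (emp p n) {-1<..2} = 1" for n
  proof -
    have "p i \<in> {-1<..2}" for i using assms[of i] by auto
    then have "{i\<in>{..n}. p i \<in> {-1<..2}} = {..n}" by auto
    then show ?thesis by (simp add: emp_measure)
  qed
  then show "\<exists>a b. a < b \<and> (\<forall>n. 1 - e < measure (emp p n) {a<..b})"
    using \<open>e > 0\<close> by (intro exI[of _ "-1"] exI[of _ 2]) auto
qed

lemma integral_apx_lim':
  assumes fm: "finite_measure N" and F: "closed F" "F \<noteq> {}" "F \<inter> space N \<in> sets N"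
    and m: "\<And>j. apx F j \<in> borel_measurable N"
  shows "(\<lambda>j. integral\<^sup>L N (apx F j)) \<longlonglongrightarrow> measure N (F \<inter> space N)"
proof -
  interpret finite_measure N by fact
  have "(\<lambda>j. integral\<^sup>L N (apx F j)) \<longlonglongrightarrow> (\<integral>t. indicator (F \<inter> space N) t \<partial>N)"
  proof (rule integral_dominated_convergence[where w="\<lambda>_. 1"])
    show "indicator (F \<inter> space N) \<in> borel_measurable N" using F(3) by measurable
    show "apx F j \<in> borel_measurable N" for j by (rule m)
    show "integrable N (\<lambda>_. 1::real)" by simp
    have "(\<lambda>j. apx F j t) \<longlonglongrightarrow> indicator (F \<inter> space N) t" if "t \<in> space N" for t
      using apx_lim[OF F(1,2), of t] that by (simp add: indicator_def)
    then show "AE t in N. (\<lambda>j. apx F j t) \<longlonglongrightarrow> indicator (F \<inter> space N) t" by simp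
    have "norm (apx F j t) \<le> 1" for j t using apx_bounds[of F j t] by simp
    then show "AE t in N. norm (apx F j t) \<le> 1" for j by simp
  qed
  then show ?thesis using F(3) by (simp add: less_top[symmetric])
qed

lemma sets_restrict_closed_gen:
  fixes L :: "'a::metric_space set"
  assumes "closed L"
  shows "sets (restrict_space borel L) = sigma_sets L ((\<inter>) L ` Collect closed)"
proof -
  have sb: "sets (borel :: 'a measure) = sigma_sets UNIV (Collect closed)"
    by (subst borel_eq_closed) (simp add: sets_measure_of)
  have "sets (restrict_space borel L) = (\<inter>) L ` sets borel" by (simp add: sets_restrict_space)
  also have "\<dots> = (\<inter>) L ` sigma_sets UNIV (Collect closed)" by (simp add: sb)
  also have "\<dots> = sigma_sets L ((\<inter>) L ` Collect closed)"
    by (rule sigma_sets_Int) (use assms sb in \<open>auto intro: sigma_sets.Basic\<close>)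
  finally show ?thesis .
qed

lemma measure_eq_from_cont:
  fixes L :: "'a::metric_space set"
  assumes L: "closed L" and fM: "finite_measure M" and fN: "finite_measure N"
    and sM: "sets M = sets (restrict_space borel L)" and sN: "sets N = sets (restrict_space borel L)"
    and eq: "\<And>\<phi>::'a \<Rightarrow> real. continuous_on UNIV \<phi> \<Longrightarrow> (\<And>z. 0 \<le> \<phi> z \<and> \<phi> z \<le> 1) \<Longrightarrow> integral\<^sup>L M \<phi> = integral\<^sup>L N \<phi>"
  shows "M = N"
proof -
  interpret M: finite_measure M by fact
  interpret N: finite_measure N by fact
  have spM: "space M = L" using sets_eq_imp_space_eq[OF sM] by (simp add: space_restrict_space)
  have spN: "space N = L" using sets_eq_imp_space_eq[OF sN] by (simp add: space_restrict_space)
  have bmM: "g \<in> borel_measurable M" if "g \<in> borel_measurable borel" for g :: "'a \<Rightarrow> real"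
    using measurable_restrict_space1[OF that, of L] by (subst measurable_cong_sets[OF sM refl])
  have bmN: "g \<in> borel_measurable N" if "g \<in> borel_measurable borel" for g :: "'a \<Rightarrow> real"
    using measurable_restrict_space1[OF that, of L] by (subst measurable_cong_sets[OF sN refl])
  have inM: "F \<inter> L \<in> sets M" if "closed F" for F using that sM by (auto simp: sets_restrict_space)
  have inN: "F \<inter> L \<in> sets N" if "closed F" for F using that sN by (auto simp: sets_restrict_space)
  have meq: "measure M (F \<inter> L) = measure N (F \<inter> L)" if F: "closed F" for F
  proof (cases "F = {}")
    case True then show ?thesis by simp
  next
    case False
    have am: "apx F j \<in> borel_measurable borel" for j by (rule borel_measurable_continuous_onI[OF apx_cont])
    have a: "(\<lambda>j. integral\<^sup>L M (apx F j)) \<longlonglongrightarrow> measure M (F \<inter> space M)"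
      by (rule integral_apx_lim'[OF fM F False]) (use inM[OF F] spM bmM[OF am] in auto)
    have b: "(\<lambda>j. integral\<^sup>L N (apx F j)) \<longlonglongrightarrow> measure N (F \<inter> space N)"
      by (rule integral_apx_lim'[OF fN F False]) (use inN[OF F] spN bmN[OF am] in auto)
    have "integral\<^sup>L M (apx F j) = integral\<^sup>L N (apx F j)" for j
      using eq[of "apx F j"] apx_cont[of F j] apx_bounds[of F j] by blast
    then have "(\<lambda>j. integral\<^sup>L M (apx F j)) = (\<lambda>j. integral\<^sup>L N (apx F j))" by (rule ext)
    then have "measure M (F \<inter> space M) = measure N (F \<inter> space N)" using LIMSEQ_unique[OF a] b by metis
    then show ?thesis using spM spN by simp
  qed
  show ?thesis
  proof (rule measure_eqI_generator_eq[where \<Omega>=L and E="(\<inter>) L ` Collect closed" and A="\<lambda>_. L"])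
    show "Int_stable ((\<inter>) L ` Collect closed)"
      unfolding Int_stable_def
    proof (safe)
      fix F1 F2 :: "'a set" assume "closed F1" "closed F2"
      show "L \<inter> F1 \<inter> (L \<inter> F2) \<in> (\<inter>) L ` Collect closed"
        by (rule image_eqI[of _ _ "F1 \<inter> F2"]) (use \<open>closed F1\<close> \<open>closed F2\<close> in auto)
    qed
    show "(\<inter>) L ` Collect closed \<subseteq> Pow L" by auto
    show "sets M = sigma_sets L ((\<inter>) L ` Collect closed)" using sM sets_restrict_closed_gen[OF L] by simp
    show "sets N = sigma_sets L ((\<inter>) L ` Collect closed)" using sN sets_restrict_closed_gen[OF L] by simp
    fix X assume "X \<in> (\<inter>) L ` Collect closed"
    then obtain F where F: "closed F" "X = F \<inter> L" by auto
    show "emeasure M X = emeasure N X"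
      using meq[OF F(1)] inM[OF F(1)] inN[OF F(1)] F(2) by (simp add: M.emeasure_eq_measure N.emeasure_eq_measure)
  next
    show "range (\<lambda>_. L) \<subseteq> (\<inter>) L ` Collect closed" by (auto intro!: image_eqI[where x=UNIV])
    show "(\<Union>i. L) = L" by simp
    show "emeasure M L \<noteq> \<infinity>" for i :: nat by simp
  qed
qed

context
  fixes f :: "'a::metric_space \<Rightarrow> 'a" and L :: "'a set" and y :: 'a and \<theta> :: "'a \<Rightarrow> real"
    and r :: "nat \<Rightarrow> nat" and \<sigma> :: "real measure"
  assumes cpt: "compact (UNIV :: 'a set)" and cont: "continuous_on UNIV f"
    and Lc: "closed L" and fL: "f ` L \<subseteq> L" and yL: "y \<in> L"
    and th0: "\<And>z. 0 \<le> \<theta> z" and th1: "\<And>z. \<theta> z \<le> 1"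
    and H: "\<And>e. e > 0 \<Longrightarrow> \<exists>\<delta>>0. \<forall>z z'. \<bar>\<theta> z - \<theta> z'\<bar> < \<delta> \<longrightarrow> dist z z' < e"
    and rmono: "strict_mono r" and rd: "real_distribution \<sigma>"
    and wc: "weak_conv_m (\<lambda>k. emp (\<lambda>i. \<theta> ((f^^i) y)) (r k)) \<sigma>"
begin

abbreviation "pp i \<equiv> \<theta> ((f^^i) y)"
abbreviation "KK \<equiv> closure (\<theta> ` L)"
abbreviation "qq \<equiv> (\<lambda>t. if t \<in> KK then decode \<theta> t else y)"
abbreviation "\<mu>\<mu> \<equiv> distr \<sigma> (restrict_space borel L) qq"

lemma orbitL: "(f^^i) y \<in> L"
  by (induction i) (use yL fL in auto)

lemma KK_sub: "KK \<subseteq> closure (range \<theta>)" by (rule closure_mono) auto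

lemma dcont: "continuous_on (closure (range \<theta>)) (decode \<theta>)"
  by (rule decode_continuous[OF cpt], erule H)

lemma dinv: "decode \<theta> (\<theta> z) = z"
  by (rule decode_inverse[OF cpt], erule H)

lemma dcl: "t \<in> closure (\<theta> ` L') \<Longrightarrow> decode \<theta> t \<in> closure L'"
  by (rule decode_in_closure[OF cpt], erule H, assumption)

lemma pi_cont: "continuous_on KK (decode \<theta>)"
  using continuous_on_subset[OF dcont KK_sub] .

lemma pi_L: "t \<in> KK \<Longrightarrow> decode \<theta> t \<in> L"
proof -
  assume "t \<in> KK"
  then have "decode \<theta> t \<in> closure L" by (rule dcl)
  then show ?thesis using closure_closed[OF Lc] by simp
qed

lemma p_in: "pp i \<in> KK"
proof -
  have "pp i \<in> \<theta> ` L" using orbitL[of i] by (rule imageI)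
  then show ?thesis using closure_subset[of "\<theta> ` L"] by (rule subsetD[rotated])
qed

lemma pi_p: "decode \<theta> (pp i) = (f^^i) y" by (rule dinv)

interpretation S: real_distribution \<sigma> by (rule rd)

lemma rds: "real_distribution (emp (\<lambda>i. \<theta> ((f^^i) y)) (r k))" by (rule emp_rd)

lemma sigmaK: "measure \<sigma> KK = 1"
proof -
  have "1 \<le> measure \<sigma> KK"
  proof (rule weak_closed_lower[OF rds rd wc])
    show "closed KK" by simp
    have "measure (emp (\<lambda>i. \<theta> ((f^^i) y)) (r k)) KK = 1" for k
    proof -
      have "{i\<in>{..r k}. pp i \<in> KK} = {..r k}" using p_in by auto
      then show ?thesis by (simp add: emp_measure)
    qed
    then show "\<forall>\<^sub>F n in sequentially. 1 \<le> measure (emp (\<lambda>i. \<theta> ((f^^i) y)) (r n)) KK" by simp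
  qed
  then show ?thesis using S.prob_le_1[of KK] by linarith
qed

lemma AE_K: "AE t in \<sigma>. t \<in> KK"
  using S.AE_prob_1[OF sigmaK] .

lemma q_borel: "qq \<in> borel_measurable borel"
  by (rule borel_measurable_continuous_on_if) (use pi_cont in auto)

lemma q_meas: "qq \<in> measurable \<sigma> (restrict_space borel L)"
proof (rule measurable_restrict_space2)
  show "qq \<in> space \<sigma> \<rightarrow> L" using pi_L yL by auto
  show "qq \<in> borel_measurable \<sigma>" by (rule rd_meas[OF rd q_borel])
qed

lemma mu_sets: "sets \<mu>\<mu> = sets (restrict_space borel L)" by simp

lemma mu_space: "space \<mu>\<mu> = L" by (simp add: space_restrict_space)

lemma mu_prob: "prob_space \<mu>\<mu>" by (rule S.prob_space_distr[OF q_meas])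

lemma bmL: "g \<in> borel_measurable borel \<Longrightarrow> g \<in> borel_measurable \<mu>\<mu>"
  using measurable_restrict_space1[of g borel borel L] by (subst measurable_cong_sets[OF mu_sets refl])

lemma int_formula:
  fixes \<phi> :: "'a \<Rightarrow> real"
  assumes pc: "continuous_on UNIV \<phi>" and pb: "\<And>z. 0 \<le> \<phi> z \<and> \<phi> z \<le> 1"
  shows "(\<lambda>k. (\<Sum>i\<le>r k. \<phi> ((f^^i) y)) / real (Suc (r k))) \<longlonglongrightarrow> integral\<^sup>L \<mu>\<mu> \<phi>"
proof -
  have pcK: "continuous_on KK (\<phi> \<circ> decode \<theta>)"
    by (rule continuous_on_compose[OF pi_cont continuous_on_subset[OF pc]]) simp
  obtain g where g: "continuous_on UNIV g" "\<And>t. t \<in> KK \<Longrightarrow> g t = (\<phi> \<circ> decode \<theta>) t"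
    using Tietze_unbounded[OF pcK, of UNIV] by auto
  define g' where "g' t = max 0 (min 1 (g t))" for t
  have g'c: "continuous_on UNIV g'" unfolding g'_def[abs_def] by (intro continuous_intros g(1))
  have g'K: "g' t = \<phi> (decode \<theta> t)" if "t \<in> KK" for t
    using g(2)[OF that] pb[of "decode \<theta> t"] by (simp add: g'_def)
  have g'b: "norm (g' t) \<le> 1" for t by (simp add: g'_def)
  have pbor: "\<phi> \<in> borel_measurable borel" by (rule borel_measurable_continuous_onI[OF pc])
  have g'bor: "g' \<in> borel_measurable borel" by (rule borel_measurable_continuous_onI[OF g'c])
  have "integral\<^sup>L \<mu>\<mu> \<phi> = (\<integral>t. \<phi> (qq t) \<partial>\<sigma>)"
    by (rule integral_distr[OF q_meas]) (rule measurable_restrict_space1[OF pbor])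
  also have "\<dots> = integral\<^sup>L \<sigma> g'"
  proof (rule integral_cong_AE)
    show "(\<lambda>t. \<phi> (qq t)) \<in> borel_measurable \<sigma>"
      using rd_meas[OF rd measurable_comp[OF q_borel pbor]] by (simp add: comp_def)
    show "g' \<in> borel_measurable \<sigma>" by (rule rd_meas[OF rd g'bor])
    show "AE t in \<sigma>. \<phi> (qq t) = g' t" using AE_K by eventually_elim (simp add: g'K)
  qed
  finally have eq1: "integral\<^sup>L \<mu>\<mu> \<phi> = integral\<^sup>L \<sigma> g'" .
  have lim: "(\<lambda>k. integral\<^sup>L (emp (\<lambda>i. \<theta> ((f^^i) y)) (r k)) g') \<longlonglongrightarrow> integral\<^sup>L \<sigma> g'"
  proof (rule weak_conv_imp_integral_bdd_continuous_conv[OF rds rd wc])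
    show "isCont g' x" for x using g'c by (simp add: continuous_on_eq_continuous_at)
    show "norm (g' x) \<le> 1" for x by (rule g'b)
  qed
  have "integral\<^sup>L (emp (\<lambda>i. \<theta> ((f^^i) y)) (r k)) g' = (\<Sum>i\<le>r k. \<phi> ((f^^i) y)) / real (Suc (r k))" for k
    by (simp add: emp_integral[OF g'bor] g'K[OF p_in] pi_p)
  then show ?thesis using lim eq1 by simp
qed

lemma f_meas: "f \<in> measurable \<mu>\<mu> \<mu>\<mu>"
proof -
  have fb: "f \<in> borel_measurable borel" using cont by (rule borel_measurable_continuous_onI)
  have "f \<in> measurable (restrict_space borel L) (restrict_space borel L)"
    by (rule measurable_restrict_space3[OF fb]) (use fL in auto)
  then show ?thesis by (simp add: measurable_cong_sets[OF mu_sets mu_sets])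
qed

lemma avg_shift:
  fixes \<phi> :: "'a \<Rightarrow> real"
  assumes pb: "\<And>z. 0 \<le> \<phi> z \<and> \<phi> z \<le> 1"
  shows "\<bar>(\<Sum>i\<le>n. \<phi> ((f^^i) (f y))) / real (Suc n) - (\<Sum>i\<le>n. \<phi> ((f^^i) y)) / real (Suc n)\<bar> \<le> 1 / real (Suc n)"
proof -
  have s1: "(\<Sum>i\<le>Suc n. \<phi> ((f^^i) y)) = \<phi> y + (\<Sum>i\<le>n. \<phi> ((f^^i) (f y)))"
    by (subst sum.atMost_Suc_shift) (simp add: funpow_Suc_right del: funpow.simps)
  have s2: "(\<Sum>i\<le>Suc n. \<phi> ((f^^i) y)) = (\<Sum>i\<le>n. \<phi> ((f^^i) y)) + \<phi> ((f^^Suc n) y)"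
    by (rule sum.atMost_Suc)
  have "(\<Sum>i\<le>n. \<phi> ((f^^i) (f y))) - (\<Sum>i\<le>n. \<phi> ((f^^i) y)) = \<phi> ((f^^Suc n) y) - \<phi> y"
    using s1 s2 by linarith
  moreover have "\<bar>\<phi> ((f^^Suc n) y) - \<phi> y\<bar> \<le> 1" using pb[of y] pb[of "(f^^Suc n) y"] by linarith
  ultimately have "\<bar>(\<Sum>i\<le>n. \<phi> ((f^^i) (f y))) - (\<Sum>i\<le>n. \<phi> ((f^^i) y))\<bar> \<le> 1" by simp
  then have "\<bar>(\<Sum>i\<le>n. \<phi> ((f^^i) (f y))) - (\<Sum>i\<le>n. \<phi> ((f^^i) y))\<bar> / real (Suc n) \<le> 1 / real (Suc n)"
    by (intro divide_right_mono) auto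
  then show ?thesis by (simp add: diff_divide_distrib[symmetric])
qed

lemma mu_inv: "distr \<mu>\<mu> \<mu>\<mu> f = \<mu>\<mu>"
proof (rule measure_eq_from_cont[OF Lc])
  interpret P: prob_space \<mu>\<mu> by (rule mu_prob)
  show "finite_measure (distr \<mu>\<mu> \<mu>\<mu> f)" by (rule P.finite_measure_distr[OF f_meas])
  show "finite_measure \<mu>\<mu>" by (rule P.finite_measure_axioms)
  show "sets (distr \<mu>\<mu> \<mu>\<mu> f) = sets (restrict_space borel L)" by simp
  show "sets \<mu>\<mu> = sets (restrict_space borel L)" by simp
  fix \<phi> :: "'a \<Rightarrow> real" assume pc: "continuous_on UNIV \<phi>" and pb: "\<And>z. 0 \<le> \<phi> z \<and> \<phi> z \<le> 1"
  have pbor: "\<phi> \<in> borel_measurable borel" by (rule borel_measurable_continuous_onI[OF pc])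
  have "integral\<^sup>L (distr \<mu>\<mu> \<mu>\<mu> f) \<phi> = (\<integral>z. \<phi> (f z) \<partial>\<mu>\<mu>)"
    by (rule integral_distr[OF f_meas bmL[OF pbor]])
  have pfc: "continuous_on UNIV (\<lambda>z. \<phi> (f z))"
    using continuous_on_compose[OF cont continuous_on_subset[OF pc]] by (simp add: comp_def)
  have A: "(\<lambda>k. (\<Sum>i\<le>r k. \<phi> (f ((f^^i) y))) / real (Suc (r k))) \<longlonglongrightarrow> (\<integral>z. \<phi> (f z) \<partial>\<mu>\<mu>)"
  proof -
    have pfb: "\<And>z. 0 \<le> \<phi> (f z) \<and> \<phi> (f z) \<le> 1" using pb by simp
    show ?thesis using int_formula[OF pfc pfb] by simp
  qed
  have B: "(\<lambda>k. (\<Sum>i\<le>r k. \<phi> ((f^^i) y)) / real (Suc (r k))) \<longlonglongrightarrow> integral\<^sup>L \<mu>\<mu> \<phi>"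
    by (rule int_formula[OF pc pb])
  have C: "(\<lambda>k. (\<Sum>i\<le>r k. \<phi> (f ((f^^i) y))) / real (Suc (r k)) - (\<Sum>i\<le>r k. \<phi> ((f^^i) y)) / real (Suc (r k))) \<longlonglongrightarrow> 0"
  proof (rule Lim_null_comparison)
    have sw: "(f^^i) (f y) = f ((f^^i) y)" for i by (simp add: funpow_swap1)
    have "norm ((\<Sum>i\<le>r k. \<phi> (f ((f^^i) y))) / real (Suc (r k)) - (\<Sum>i\<le>r k. \<phi> ((f^^i) y)) / real (Suc (r k))) \<le> 1 / real (Suc (r k))" for k
      using avg_shift[OF pb, where n="r k"] unfolding sw by simp
    then show "\<forall>\<^sub>F k in sequentially. norm ((\<Sum>i\<le>r k. \<phi> (f ((f^^i) y))) / real (Suc (r k)) - (\<Sum>i\<le>r k. \<phi> ((f^^i) y)) / real (Suc (r k))) \<le> 1 / real (Suc (r k))"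
      by (intro always_eventually allI)
    have "(\<lambda>k. 1 / real (Suc k)) \<longlonglongrightarrow> 0" by (rule LIMSEQ_Suc[OF lim_const_over_n])
    from LIMSEQ_subseq_LIMSEQ[OF this rmono]
    show "(\<lambda>k. 1 / real (Suc (r k))) \<longlonglongrightarrow> 0" by (simp add: comp_def)
  qed
  have "(\<lambda>k. (\<Sum>i\<le>r k. \<phi> ((f^^i) y)) / real (Suc (r k))) \<longlonglongrightarrow> (\<integral>z. \<phi> (f z) \<partial>\<mu>\<mu>) - 0"
    using tendsto_diff[OF A C] by simp
  then have "(\<integral>z. \<phi> (f z) \<partial>\<mu>\<mu>) = integral\<^sup>L \<mu>\<mu> \<phi>" using LIMSEQ_unique[OF _ B] by simp
  then show "integral\<^sup>L (distr \<mu>\<mu> \<mu>\<mu> f) \<phi> = integral\<^sup>L \<mu>\<mu> \<phi>"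
    using \<open>integral\<^sup>L (distr \<mu>\<mu> \<mu>\<mu> f) \<phi> = (\<integral>z. \<phi> (f z) \<partial>\<mu>\<mu>)\<close> by simp
qed

lemma mu_in: "\<mu>\<mu> \<in> invariant_measures f L"
  unfolding invariant_measures_def
proof (intro CollectI conjI ballI)
  show "sets \<mu>\<mu> = sets (restrict_space borel L)" by simp
  show "prob_space \<mu>\<mu>" by (rule mu_prob)
  fix A assume A: "A \<in> sets \<mu>\<mu>"
  have "emeasure \<mu>\<mu> (f -` A \<inter> L) = emeasure (distr \<mu>\<mu> \<mu>\<mu> f) A"
    using emeasure_distr[OF f_meas A] mu_space by simp
  also have "\<dots> = emeasure \<mu>\<mu> A" by (simp add: mu_inv)
  finally show "emeasure \<mu>\<mu> (f -` A \<inter> L) = emeasure \<mu>\<mu> A" .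
qed

lemma mu_pos:
  assumes F: "closed F" and c: "c > 0"
    and ev: "\<forall>\<^sub>F n in sequentially. c * real n \<le> real (card {i\<in>{..<n}. (f^^i) y \<in> F})"
  shows "measure \<mu>\<mu> (F \<inter> L) > 0"
proof -
  define KF where "KF = KK \<inter> decode \<theta> -` F"
  have KFc: "closed KF" unfolding KF_def by (rule continuous_closed_preimage[OF pi_cont]) (use F in auto)
  obtain N where N: "\<And>n. n \<ge> N \<Longrightarrow> c * real n \<le> real (card {i\<in>{..<n}. (f^^i) y \<in> F})"
    using ev unfolding eventually_sequentially by blast
  have "c / 2 \<le> measure \<sigma> KF"
  proof (rule weak_closed_lower[OF rds rd wc KFc])
    have "c / 2 \<le> measure (emp (\<lambda>i. \<theta> ((f^^i) y)) (r k)) KF" if k: "k \<ge> max N 1" for k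
    proof -
      let ?n = "r k"
      have n: "?n \<ge> N" "?n \<ge> 1" using seq_suble[OF rmono, of k] k by auto
      have set_eq: "{i\<in>{..?n}. pp i \<in> KF} = {i\<in>{..?n}. (f^^i) y \<in> F}"
        using p_in pi_p by (auto simp: KF_def)
      have "{i\<in>{..<?n}. (f^^i) y \<in> F} \<subseteq> {i\<in>{..?n}. (f^^i) y \<in> F}" by auto
      then have "card {i\<in>{..<?n}. (f^^i) y \<in> F} \<le> card {i\<in>{..?n}. (f^^i) y \<in> F}" by (intro card_mono) auto
      then have cnt: "c * real ?n \<le> real (card {i\<in>{..?n}. (f^^i) y \<in> F})" using N[OF n(1)] by linarith
      have "c / 2 \<le> c * real ?n / real (Suc ?n)" using c n(2) by (simp add: field_simps)
      also have "\<dots> \<le> real (card {i\<in>{..?n}. (f^^i) y \<in> F}) / real (Suc ?n)"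
        using cnt by (intro divide_right_mono) auto
      also have "\<dots> = measure (emp (\<lambda>i. \<theta> ((f^^i) y)) ?n) KF"
      proof -
        have "measure (emp (\<lambda>i. \<theta> ((f^^i) y)) ?n) KF = real (card {i\<in>{..?n}. pp i \<in> KF}) / real (Suc ?n)"
          by (rule emp_measure) (use KFc in simp)
        then show ?thesis unfolding set_eq by simp
      qed
      finally show ?thesis .
    qed
    then show "\<forall>\<^sub>F k in sequentially. c / 2 \<le> measure (emp (\<lambda>i. \<theta> ((f^^i) y)) (r k)) KF"
      unfolding eventually_sequentially by blast
  qed
  also have "measure \<sigma> KF \<le> measure \<sigma> (qq -` (F \<inter> L) \<inter> space \<sigma>)"
  proof (rule S.finite_measure_mono)
    show "KF \<subseteq> qq -` (F \<inter> L) \<inter> space \<sigma>" using pi_L by (auto simp: KF_def)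
    have "F \<inter> L \<in> sets (restrict_space borel L)" using F by (auto simp: sets_restrict_space)
    then show "qq -` (F \<inter> L) \<inter> space \<sigma> \<in> sets \<sigma>" by (rule measurable_sets[OF q_meas])
  qed
  also have "\<dots> = measure \<mu>\<mu> (F \<inter> L)"
  proof -
    have "F \<inter> L \<in> sets (restrict_space borel L)" using F by (auto simp: sets_restrict_space)
    then show ?thesis by (simp add: measure_distr[OF q_meas])
  qed
  finally show ?thesis using c by linarith
qed

end

lemma KB:
  fixes f :: "'a::metric_space \<Rightarrow> 'a"
  assumes cpt: "compact (UNIV :: 'a set)" and cont: "continuous_on UNIV f"
    and Lc: "closed L" and fL: "f ` L \<subseteq> L" and yL: "y \<in> L"
    and F: "closed F" and c: "c > 0"
    and ev: "\<forall>\<^sub>F n in sequentially. c * real n \<le> real (card {i\<in>{..<n}. (f^^i) y \<in> F})"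
  shows "\<exists>\<mu>\<in>invariant_measures f L. measure \<mu> (F \<inter> L) > 0"
proof -
  obtain \<theta> :: "'a \<Rightarrow> real" where th0: "\<And>z. 0 \<le> \<theta> z" and th1: "\<And>z. \<theta> z \<le> 1"
    and H: "\<And>e. e > 0 \<Longrightarrow> \<exists>\<delta>>0. \<forall>z z'. \<bar>\<theta> z - \<theta> z'\<bar> < \<delta> \<longrightarrow> dist z z' < e"
    using coding[OF cpt] by metis
  have "tight (emp (\<lambda>i. \<theta> ((f^^i) y)))" by (rule emp_tight) (use th0 th1 in auto)
  from tight_imp_convergent_subsubsequence[OF this strict_mono_id]
  obtain r \<sigma> where r: "strict_mono r" and rd: "real_distribution \<sigma>"
    and wc0: "weak_conv_m (emp (\<lambda>i. \<theta> ((f^^i) y)) \<circ> id \<circ> r) \<sigma>" by blast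
  have wc: "weak_conv_m (\<lambda>k. emp (\<lambda>i. \<theta> ((f^^i) y)) (r k)) \<sigma>" using wc0 by (simp add: comp_def)
  let ?\<mu> = "distr \<sigma> (restrict_space borel L) (\<lambda>t. if t \<in> closure (\<theta> ` L) then decode \<theta> t else y)"
  have "?\<mu> \<in> invariant_measures f L"
    by (rule mu_in[OF cpt cont Lc fL yL th0 th1 H r rd wc])
  moreover have "measure ?\<mu> (F \<inter> L) > 0"
    by (rule mu_pos[OF cpt cont Lc fL yL th0 th1 H r rd wc F c ev])
  ultimately show ?thesis by blast
qed

lemma center_props:
  fixes f :: "'a::metric_space \<Rightarrow> 'a"
  assumes cpt: "compact (UNIV :: 'a set)" and cont: "continuous_on UNIV f"
  shows "is_measure_center f (omega_limit f x) (closure (Wset f x))"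
  unfolding is_measure_center_def
proof (intro conjI allI impI ballI)
  let ?L = "omega_limit f x"
  show "closure (Wset f x) \<subseteq> ?L" "closed (closure (Wset f x))" "f ` closure (Wset f x) \<subseteq> closure (Wset f x)"
    using closureW_props[OF cont] by auto
  show "emeasure \<mu> (closure (Wset f x)) = 1" if "\<mu> \<in> invariant_measures f ?L" for \<mu>
    by (rule full_measure[OF cpt cont that])
  fix D assume D: "D \<subseteq> ?L \<and> closed D \<and> f ` D \<subseteq> D \<and> (\<forall>\<mu>\<in>invariant_measures f ?L. emeasure \<mu> D = 1)"
  have "Wset f x \<subseteq> D"
  proof
    fix y assume yW: "y \<in> Wset f x"
    show "y \<in> D"
    proof (rule ccontr)
      assume yD: "y \<notin> D"
      have "open (- D)" using D by auto
      then obtain e where e: "e > 0" "ball y e \<subseteq> - D" using yD open_contains_ball by blast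
      define \<epsilon> where "\<epsilon> = e / 2"
      have eps: "\<epsilon> > 0" using e by (simp add: \<epsilon>_def)
      have FD: "cball y \<epsilon> \<inter> D = {}"
      proof (safe)
        fix z assume z: "z \<in> cball y \<epsilon>" "z \<in> D"
        then have "dist y z < e" using e(1) by (simp add: \<epsilon>_def)
        then have "z \<in> ball y e" by simp
        then show "z \<in> {}" using e(2) z(2) by blast
      qed
      have yL: "y \<in> ?L" using yW by (simp add: Wset_iff)
      have "posdens (visit_times f y (ball y \<epsilon>))" using yW eps by (simp add: Wset_iff)
      then obtain c where c: "c > 0" "\<forall>\<^sub>F n in sequentially. c * real n \<le> real (card (visit_times f y (ball y \<epsilon>) \<inter> {0..<n}))"
        unfolding posdens_def by blast
      have ev: "\<forall>\<^sub>F n in sequentially. c * real n \<le> real (card {i\<in>{..<n}. (f^^i) y \<in> cball y \<epsilon>})"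
        using c(2)
      proof eventually_elim
        case (elim n)
        have "visit_times f y (ball y \<epsilon>) \<inter> {0..<n} \<subseteq> {i\<in>{..<n}. (f^^i) y \<in> cball y \<epsilon>}"
          by (auto simp: visit_times_def)
        then have "card (visit_times f y (ball y \<epsilon>) \<inter> {0..<n}) \<le> card {i\<in>{..<n}. (f^^i) y \<in> cball y \<epsilon>}"
          by (intro card_mono) auto
        then show ?case using elim by linarith
      qed
      have fL: "f ` ?L \<subseteq> ?L" using omega_limit_invariant[OF cont] by blast
      obtain \<mu> where mu: "\<mu> \<in> invariant_measures f ?L" and pos: "measure \<mu> (cball y \<epsilon> \<inter> ?L) > 0"
        using KB[OF cpt cont closed_omega_limit fL yL closed_cball c(1) ev] by blast
      note b = inv_basic[OF cont fL mu]
      interpret P: prob_space \<mu> by (rule b(3))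
      have Ds: "D \<in> sets \<mu>"
      proof -
        have "D \<inter> ?L \<in> sets \<mu>" using D b(1) by (auto simp: sets_restrict_space)
        then show ?thesis using D by (simp add: Int_absorb2)
      qed
      have Cs: "cball y \<epsilon> \<inter> ?L \<in> sets \<mu>" using b(1) by (auto simp: sets_restrict_space)
      have "emeasure \<mu> D = 1" using D mu by blast
      then have "measure \<mu> D = 1" by (simp add: P.emeasure_eq_measure)
      moreover have "measure \<mu> (D \<union> (cball y \<epsilon> \<inter> ?L)) = measure \<mu> D + measure \<mu> (cball y \<epsilon> \<inter> ?L)"
        by (rule P.finite_measure_Union[OF Ds Cs]) (use FD in auto)
      moreover have "measure \<mu> (D \<union> (cball y \<epsilon> \<inter> ?L)) \<le> 1" by (rule P.prob_le_1)
      ultimately show False using pos by linarith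
    qed
  qed
  then show "closure (Wset f x) \<subseteq> D" using D by (intro closure_minimal) auto
qed

theorem lemma2p3:
  fixes f :: "'a::metric_space \<Rightarrow> 'a" and x :: 'a
  assumes "compact (UNIV :: 'a set)"
    and "continuous_on UNIV f"
  shows "measure_center (omega_limit f x) f =
         closure {y \<in> omega_limit f x.
                    \<forall>\<epsilon>>0. lower_density (visit_times f y (ball y \<epsilon>)) > 0}"
proof -
  have C: "is_measure_center f (omega_limit f x) (closure (Wset f x))"
    by (rule center_props[OF assms])
  have "(THE C. is_measure_center f (omega_limit f x) C) = closure (Wset f x)"
  proof (rule the_equality[where P="is_measure_center f (omega_limit f x)", OF C])
    fix C' assume C': "is_measure_center f (omega_limit f x) C'"
    let ?L = "omega_limit f x"
    let ?W = "closure (Wset f x)"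
    have m': "\<forall>D. D \<subseteq> ?L \<and> closed D \<and> f ` D \<subseteq> D \<and> (\<forall>\<mu>\<in>invariant_measures f ?L. emeasure \<mu> D = 1) \<longrightarrow> C' \<subseteq> D"
      using C' unfolding is_measure_center_def by (elim conjE) assumption
    have m: "\<forall>D. D \<subseteq> ?L \<and> closed D \<and> f ` D \<subseteq> D \<and> (\<forall>\<mu>\<in>invariant_measures f ?L. emeasure \<mu> D = 1) \<longrightarrow> ?W \<subseteq> D"
      using C unfolding is_measure_center_def by (elim conjE) assumption
    have p': "C' \<subseteq> ?L \<and> closed C' \<and> f ` C' \<subseteq> C' \<and> (\<forall>\<mu>\<in>invariant_measures f ?L. emeasure \<mu> C' = 1)"
      using C' unfolding is_measure_center_def by (elim conjE) (intro conjI; assumption)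
    have p: "?W \<subseteq> ?L \<and> closed ?W \<and> f ` ?W \<subseteq> ?W \<and> (\<forall>\<mu>\<in>invariant_measures f ?L. emeasure \<mu> ?W = 1)"
      using C unfolding is_measure_center_def by (elim conjE) (intro conjI; assumption)
    have "C' \<subseteq> ?W" using m'[rule_format, OF p] .
    moreover have "?W \<subseteq> C'" using m[rule_format, OF p'] .
    ultimately show "C' = closure (Wset f x)" by blast
  qed
  then show ?thesis unfolding measure_center_def Wset_def .
qed

end
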